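(* Let $\{R_\alpha:\alpha\in\Phi\}$ be an $R$-matrix. For $v\in W_{\mathrm{aff}}$ and a decomposition $v=s_{i_1}\cdots s_{i_l}$ (reduced or not) into generators $s_0,\dots,s_r$, let $\beta_j=\bar s_{i_1}\cdots\bar s_{i_{j-1}}(\alpha_{i_j})$ for $j=1,\dots,l$. Then the operator $R_{\beta_l}R_{\beta_{l-1}}\cdots R_{\beta_1}$ depends only on $v$, not on the choice of decomposition.
   Context: $\Phi$ is an irreducible root system with simple roots $\alpha_1,\dots,\alpha_r$, coroots $\alpha^\vee=2\alpha/(\alpha,\alpha)$, Weyl group $W$. $W_{\mathrm{aff}}$ is the affine Weyl group generated by the affine reflections $s_{\alpha,k}(\lambda)=\lambda-((\lambda,\alpha^\vee)-k)\alpha$; it is a Coxeter group with generators $s_0=s_{\alpha_0,-1}$ and $s_i=s_{\alpha_i,0}$, $i=1,\dots,r$, where $\alpha_0=-\theta$ and $\theta^\vee$ is the highest coroot. For $v\in W_{\mathrm{aff}}$, $\bar v\in W$ is its linear part ($\bar s_{\alpha,k}=s_\alpha$). A collection of invertible operators $\{R_\alpha:\alpha\in\Phi\}$ on a vector space is an $R$-matrix (satisfies the Yang–Baxter equation) if $R_{-\alpha}=R_\alpha^{-1}$ for all $\alpha$, and for every pair $\alpha,\beta\in\Phi$ with $(\alpha,\beta)\le0$, $$R_\alpha R_{s_\alpha(\beta)}R_{s_\alpha s_\beta(\alpha)}\cdots R_{s_\beta(\alpha)}R_\beta=R_\beta R_{s_\beta(\alpha)}\cdots R_{s_\alpha s_\beta(\alpha)}R_{s_\alpha(\beta)}R_\alpha,$$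 where each side has $m$ factors, $2m$ being the order of the dihedral group generated by $s_\alpha,s_\beta$, and the subscripts run over the $m$ roots of the rank-2 subsystem generated by $\alpha,\beta$ that are nonnegative combinations of $\alpha,\beta$, in the order $\alpha,s_\alpha(\beta),s_\alpha s_\beta(\alpha),\dots,s_\beta(\alpha),\beta$. *)

theory Defs
  imports "HOL-Analysis.Analysis"
begin

definition coroot :: "'a::euclidean_space \<Rightarrow> 'a" where
  "coroot \<alpha> = (2 / (\<alpha> \<bullet> \<alpha>)) *\<^sub>R \<alpha>"

definition refl :: "'a::euclidean_space \<Rightarrow> 'a \<Rightarrow> 'a" where
  "refl \<alpha> x = x - (x \<bullet> coroot \<alpha>) *\<^sub>R \<alpha>"

definition aff_refl :: "'a::euclidean_space \<Rightarrow> real \<Rightarrow> 'a \<Rightarrow> 'a" where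
  "aff_refl \<alpha> k x = x - ((x \<bullet> coroot \<alpha>) - k) *\<^sub>R \<alpha>"

definition root_system :: "'a::euclidean_space set \<Rightarrow> bool" where
  "root_system \<Phi> \<longleftrightarrow> finite \<Phi> \<and> 0 \<notin> \<Phi> \<and> span \<Phi> = UNIV \<and>
     (\<forall>\<alpha>\<in>\<Phi>. \<forall>\<beta>\<in>\<Phi>. refl \<alpha> \<beta> \<in> \<Phi>) \<and>
     (\<forall>\<alpha>\<in>\<Phi>. \<forall>\<beta>\<in>\<Phi>. \<beta> \<bullet> coroot \<alpha> \<in> \<int>) \<and>
     (\<forall>\<alpha>\<in>\<Phi>. \<forall>c. c *\<^sub>R \<alpha> \<in> \<Phi> \<longrightarrow> c = 1 \<or> c = -1)"

definition irreducible_root_system :: "'a::euclidean_space set \<Rightarrow> bool" where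
  "irreducible_root_system \<Phi> \<longleftrightarrow> root_system \<Phi> \<and> \<Phi> \<noteq> {} \<and>
     \<not> (\<exists>A B. A \<noteq> {} \<and> B \<noteq> {} \<and> A \<union> B = \<Phi> \<and> A \<inter> B = {} \<and>
              (\<forall>x\<in>A. \<forall>y\<in>B. x \<bullet> y = 0))"

definition simple_roots :: "'a::euclidean_space set \<Rightarrow> nat \<Rightarrow> (nat \<Rightarrow> 'a) \<Rightarrow> bool" where
  "simple_roots \<Phi> r \<alpha> \<longleftrightarrow> inj_on \<alpha> {1..r} \<and> \<alpha> ` {1..r} \<subseteq> \<Phi> \<and>
     independent (\<alpha> ` {1..r}) \<and>
     (\<forall>\<beta>\<in>\<Phi>. \<exists>c::nat \<Rightarrow> int. \<beta> = (\<Sum>i=1..r. of_int (c i) *\<^sub>R \<alpha> i) \<and>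
        ((\<forall>i\<in>{1..r}. c i \<ge> 0) \<or> (\<forall>i\<in>{1..r}. c i \<le> 0)))"

definition highest_coroot_root :: "'a::euclidean_space set \<Rightarrow> nat \<Rightarrow> (nat \<Rightarrow> 'a) \<Rightarrow> 'a \<Rightarrow> bool" where
  "highest_coroot_root \<Phi> r \<alpha> \<theta> \<longleftrightarrow> \<theta> \<in> \<Phi> \<and>
     (\<forall>\<beta>\<in>\<Phi>. \<exists>c::nat \<Rightarrow> nat. coroot \<theta> - coroot \<beta> = (\<Sum>i=1..r. of_nat (c i) *\<^sub>R coroot (\<alpha> i)))"

definition aff_simple :: "(nat \<Rightarrow> 'a::euclidean_space) \<Rightarrow> 'a \<Rightarrow> nat \<Rightarrow> 'a" where
  "aff_simple \<alpha> \<theta> i = (if i = 0 then - \<theta> else \<alpha> i)"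

definition gen :: "(nat \<Rightarrow> 'a::euclidean_space) \<Rightarrow> 'a \<Rightarrow> nat \<Rightarrow> 'a \<Rightarrow> 'a" where
  "gen \<alpha> \<theta> i = (if i = 0 then aff_refl (- \<theta>) (-1) else aff_refl (\<alpha> i) 0)"

definition gen_lin :: "(nat \<Rightarrow> 'a::euclidean_space) \<Rightarrow> 'a \<Rightarrow> nat \<Rightarrow> 'a \<Rightarrow> 'a" where
  "gen_lin \<alpha> \<theta> i = refl (aff_simple \<alpha> \<theta> i)"

definition word_elem :: "(nat \<Rightarrow> 'a::euclidean_space) \<Rightarrow> 'a \<Rightarrow> nat list \<Rightarrow> 'a \<Rightarrow> 'a" where
  "word_elem \<alpha> \<theta> w = foldr (\<circ>) (map (gen \<alpha> \<theta>) w) id"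

text \<open>beta_j = bar s_{i_1} ... bar s_{i_{j-1}} (alpha_{i_j}); here 0-indexed: j = 0..l-1.\<close>
definition word_roots :: "(nat \<Rightarrow> 'a::euclidean_space) \<Rightarrow> 'a \<Rightarrow> nat list \<Rightarrow> 'a list" where
  "word_roots \<alpha> \<theta> w = map (\<lambda>j. foldr (\<circ>) (map (gen_lin \<alpha> \<theta>) (take j w)) id
                                    (aff_simple \<alpha> \<theta> (w ! j))) [0..<length w]"

definition word_operator :: "('a \<Rightarrow> 'v \<Rightarrow> 'v) \<Rightarrow> (nat \<Rightarrow> 'a::euclidean_space) \<Rightarrow> 'a \<Rightarrow> nat list \<Rightarrow> 'v \<Rightarrow> 'v" where
  "word_operator R \<alpha> \<theta> w = fold (\<lambda>\<beta> acc. R \<beta> \<circ> acc) (word_roots \<alpha> \<theta> w) id"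

fun alt_prod :: "'a::euclidean_space \<Rightarrow> 'a \<Rightarrow> nat \<Rightarrow> 'a \<Rightarrow> 'a" where
  "alt_prod a b 0 = id"
| "alt_prod a b (Suc k) = refl a \<circ> alt_prod b a k"

definition dihedral_m :: "'a::euclidean_space \<Rightarrow> 'a \<Rightarrow> nat" where
  "dihedral_m a b = (LEAST n. n > 0 \<and> (refl a \<circ> refl b) ^^ n = id)"

definition rank2_roots :: "'a::euclidean_space \<Rightarrow> 'a \<Rightarrow> 'a list" where
  "rank2_roots a b = map (\<lambda>k. alt_prod a b k (if even k then a else b)) [0..<dihedral_m a b]"

definition R_matrix :: "('k::field \<Rightarrow> 'v::ab_group_add \<Rightarrow> 'v) \<Rightarrow> 'a::euclidean_space set \<Rightarrow> ('a \<Rightarrow> 'v \<Rightarrow> 'v) \<Rightarrow> bool" where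
  "R_matrix sc \<Phi> R \<longleftrightarrow>
     (\<forall>\<alpha>\<in>\<Phi>. Vector_Spaces.linear sc sc (R \<alpha>) \<and> bij (R \<alpha>)) \<and>
     (\<forall>\<alpha>\<in>\<Phi>. R (- \<alpha>) = inv (R \<alpha>)) \<and>
     (\<forall>a\<in>\<Phi>. \<forall>b\<in>\<Phi>. a \<bullet> b \<le> 0 \<and> b \<noteq> - a \<longrightarrow>
        fold (\<lambda>\<gamma> acc. acc \<circ> R \<gamma>) (rank2_roots a b) id
        = fold (\<lambda>\<gamma> acc. R \<gamma> \<circ> acc) (rank2_roots a b) id)"

end

theory Submission
  imports Defs
begin


lemma coroot_neg: "coroot (- x) = - coroot (x::'a::euclidean_space)"
  by (simp add: coroot_def)

lemma coroot_zero_iff: "coroot (x::'a::euclidean_space) = 0 \<longleftrightarrow> x = 0"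
  by (simp add: coroot_def)

lemma coroot_coroot: "(x::'a::euclidean_space) \<noteq> 0 \<Longrightarrow> coroot (coroot x) = x"
  by (simp add: coroot_def field_simps power2_eq_square)

lemma inner_coroot_self: "(x::'a::euclidean_space) \<noteq> 0 \<Longrightarrow> x \<bullet> coroot x = 2"
  by (simp add: coroot_def)

lemma refl_alt: "refl a x = x - (x \<bullet> a) *\<^sub>R coroot a"
  by (simp add: refl_def coroot_def algebra_simps)

lemma linear_refl: "linear (refl a)"
  by (rule linearI) (simp_all add: refl_def inner_add_left algebra_simps)

lemma refl_add: "refl a (x + y) = refl a x + refl a y"
  by (simp add: refl_def inner_add_left algebra_simps)
lemma refl_scale: "refl a (c *\<^sub>R x) = c *\<^sub>R refl a x"
  by (simp add: refl_def algebra_simps)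
lemma refl_minus: "refl a (- x) = - refl a x"
  by (simp add: refl_def algebra_simps)
lemma refl_diff: "refl a (x - y) = refl a x - refl a y"
  by (simp add: refl_def inner_diff_left algebra_simps)

lemma refl_self: "a \<noteq> 0 \<Longrightarrow> refl a a = - a"
  by (simp add: refl_def inner_coroot_self scaleR_2)

lemma refl_refl: "(a::'a::euclidean_space) \<noteq> 0 \<Longrightarrow> refl a (refl a x) = x"
proof -
  assume "a \<noteq> 0"
  have "refl a (refl a x) = refl a x - (x \<bullet> coroot a) *\<^sub>R refl a a"
    by (subst refl_def[of a x]) (simp add: refl_diff refl_scale)
  also have "\<dots> = x" using \<open>a \<noteq> 0\<close> by (simp add: refl_self) (simp add: refl_def)
  finally show ?thesis .
qed

lemma refl_inner: "(a::'a::euclidean_space) \<noteq> 0 \<Longrightarrow> refl a x \<bullet> refl a y = x \<bullet> y"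
  by (simp add: refl_def coroot_def inner_diff_left inner_diff_right algebra_simps power2_eq_square)
     (simp add: field_simps inner_commute)

lemma refl_neg_root: "refl (- a) = refl a"
  by (rule ext) (simp add: refl_def coroot_neg)

lemma coroot_lin:
  assumes "linear L" "\<And>x y. L x \<bullet> L y = x \<bullet> y"
  shows "coroot (L x) = L (coroot x)"
  using assms by (simp add: coroot_def linear_scale)

lemma refl_conj:
  assumes "linear L" "\<And>x y. L x \<bullet> L y = x \<bullet> y"
  shows "refl (L a) (L x) = L (refl a x)"
  using assms by (simp add: refl_def coroot_lin linear_diff linear_scale)

lemma aff_refl_invol: "(a::'a::euclidean_space) \<noteq> 0 \<Longrightarrow> aff_refl a k (aff_refl a k x) = x"
  by (simp add: aff_refl_def inner_diff_left inner_coroot_self algebra_simps)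

lemma aff_refl_lin: "aff_refl a k x = refl a x + k *\<^sub>R a"
  by (simp add: aff_refl_def refl_def algebra_simps)


lemma sdelta: "finite A \<Longrightarrow> j \<in> A \<Longrightarrow> (\<Sum>i\<in>A. (if i = j then c else 0) *\<^sub>R (x i :: 'b::real_vector)) = c *\<^sub>R x j"
proof -
  assume "finite A" "j \<in> A"
  have "(\<Sum>i\<in>A. (if i = j then c else 0) *\<^sub>R x i) = (\<Sum>i\<in>A. if i = j then c *\<^sub>R x j else 0)"
    by (rule sum.cong) auto
  also have "\<dots> = c *\<^sub>R x j" using \<open>finite A\<close> \<open>j \<in> A\<close> by (simp add: sum.delta)
  finally show ?thesis .
qed

locale affsys =
  fixes \<Phi> :: "'a::euclidean_space set" and r :: nat and \<alpha> :: "nat \<Rightarrow> 'a" and \<theta> :: 'a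
  assumes rs: "root_system \<Phi>" and sr: "simple_roots \<Phi> r \<alpha>" and hc: "highest_coroot_root \<Phi> r \<alpha> \<theta>"
begin

lemma zero_notin: "0 \<notin> \<Phi>" using rs by (simp add: root_system_def)
lemma refl_closed: "a \<in> \<Phi> \<Longrightarrow> b \<in> \<Phi> \<Longrightarrow> refl a b \<in> \<Phi>" using rs by (simp add: root_system_def)
lemma integral: "a \<in> \<Phi> \<Longrightarrow> b \<in> \<Phi> \<Longrightarrow> b \<bullet> coroot a \<in> \<int>" using rs by (simp add: root_system_def)
lemma reduced: "a \<in> \<Phi> \<Longrightarrow> c *\<^sub>R a \<in> \<Phi> \<Longrightarrow> c = 1 \<or> c = -1" using rs by (simp add: root_system_def)
lemma nonzero: "a \<in> \<Phi> \<Longrightarrow> a \<noteq> 0" using zero_notin by auto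
lemma neg_closed: "a \<in> \<Phi> \<Longrightarrow> - a \<in> \<Phi>"
  using refl_closed[of a a] refl_self[of a] nonzero by auto

lemma simple_in: "i \<in> {1..r} \<Longrightarrow> \<alpha> i \<in> \<Phi>" using sr by (auto simp: simple_roots_def)
lemma theta_in: "\<theta> \<in> \<Phi>" using hc by (simp add: highest_coroot_root_def)

lemma indep_sum:
  assumes "(\<Sum>i=1..r. c i *\<^sub>R \<alpha> i) = 0" "i \<in> {1..r}" shows "c i = 0"
proof -
  have inj: "inj_on \<alpha> {1..r}" and ind: "independent (\<alpha> ` {1..r})" using sr by (auto simp: simple_roots_def)
  define u where "u = (\<lambda>v. c (the_inv_into {1..r} \<alpha> v))"
  have "(\<Sum>v\<in>\<alpha> ` {1..r}. u v *\<^sub>R v) = (\<Sum>i=1..r. u (\<alpha> i) *\<^sub>R \<alpha> i)"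
    using inj by (simp add: sum.reindex)
  also have "\<dots> = (\<Sum>i=1..r. c i *\<^sub>R \<alpha> i)"
    by (rule sum.cong) (simp_all only: u_def the_inv_into_f_f[OF inj])
  finally have "(\<Sum>v\<in>\<alpha> ` {1..r}. u v *\<^sub>R v) = 0" using assms(1) by simp
  with ind have "\<forall>v\<in>\<alpha> ` {1..r}. u v = 0"
    using real_vector.dependent_finite[of "\<alpha> ` {1..r}"] by blast
  then have "u (\<alpha> i) = 0" using assms(2) by auto
  moreover have "the_inv_into {1..r} \<alpha> (\<alpha> i) = i" using the_inv_into_f_f[OF inj assms(2)] .
  ultimately show ?thesis by (simp add: u_def)
qed

lemma simple_nz: "i \<in> {1..r} \<Longrightarrow> \<alpha> i \<noteq> 0" using simple_in nonzero by auto

lemma coeff_unique: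
  assumes "(\<Sum>i=1..r. c i *\<^sub>R \<alpha> i) = (\<Sum>i=1..r. d i *\<^sub>R \<alpha> i)" "i \<in> {1..r}" shows "c i = d i"
proof -
  have "(\<Sum>i=1..r. (c i - d i) *\<^sub>R \<alpha> i) = 0"
    using assms(1) by (simp add: scaleR_diff_left sum_subtractf)
  from indep_sum[OF this assms(2)] show ?thesis by simp
qed

lemma coroot_sum: "(\<Sum>i=1..r. c i *\<^sub>R coroot (\<alpha> i)) = (\<Sum>i=1..r. (c i * (2 / (\<alpha> i \<bullet> \<alpha> i))) *\<^sub>R \<alpha> i)"
  by (simp add: coroot_def)

lemma coroot_coeff_unique:
  assumes "(\<Sum>i=1..r. c i *\<^sub>R coroot (\<alpha> i)) = (\<Sum>i=1..r. d i *\<^sub>R coroot (\<alpha> i))" "i \<in> {1..r}" shows "c i = d i"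
proof -
  from coeff_unique[OF assms(1)[unfolded coroot_sum] assms(2)]
  have "c i * (2 / (\<alpha> i \<bullet> \<alpha> i)) = d i * (2 / (\<alpha> i \<bullet> \<alpha> i))" .
  moreover have "\<alpha> i \<bullet> \<alpha> i \<noteq> 0" using simple_nz[OF assms(2)] by simp
  ultimately show ?thesis by simp
qed


lemma expansion:
  assumes "\<beta> \<in> \<Phi>"
  obtains c :: "nat \<Rightarrow> real" where "\<beta> = (\<Sum>i=1..r. c i *\<^sub>R \<alpha> i)"
    "(\<forall>i\<in>{1..r}. c i \<ge> 0) \<or> (\<forall>i\<in>{1..r}. c i \<le> 0)"
proof -
  from sr assms obtain c :: "nat \<Rightarrow> int" where "\<beta> = (\<Sum>i=1..r. of_int (c i) *\<^sub>R \<alpha> i)"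
    "(\<forall>i\<in>{1..r}. c i \<ge> 0) \<or> (\<forall>i\<in>{1..r}. c i \<le> 0)"
    unfolding simple_roots_def by blast
  then show ?thesis using that[of "\<lambda>i. of_int (c i)"] by auto
qed

lemma highest:
  assumes "\<beta> \<in> \<Phi>"
  obtains c :: "nat \<Rightarrow> real" where "coroot \<theta> - coroot \<beta> = (\<Sum>i=1..r. c i *\<^sub>R coroot (\<alpha> i))"
    "\<forall>i. c i \<ge> 0"
proof -
  from hc assms obtain c :: "nat \<Rightarrow> nat" where "coroot \<theta> - coroot \<beta> = (\<Sum>i=1..r. of_nat (c i) *\<^sub>R coroot (\<alpha> i))"
    unfolding highest_coroot_root_def by blast
  then show ?thesis using that[of "\<lambda>i. of_nat (c i)"] by auto
qed

lemma theta_coroot: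
  obtains e :: "nat \<Rightarrow> real" where "coroot \<theta> = (\<Sum>i=1..r. e i *\<^sub>R coroot (\<alpha> i))" "\<forall>i. e i \<ge> 0"
proof -
  obtain c where c: "coroot \<theta> - coroot (- \<theta>) = (\<Sum>i=1..r. c i *\<^sub>R coroot (\<alpha> i))" "\<forall>i. c i \<ge> 0"
    using highest[OF neg_closed[OF theta_in]] by blast
  have "coroot \<theta> = (1/2) *\<^sub>R (coroot \<theta> - coroot (- \<theta>))" by (simp add: coroot_neg)
  also have "\<dots> = (\<Sum>i=1..r. (c i / 2) *\<^sub>R coroot (\<alpha> i))" using c(1) by (simp add: scaleR_sum_right)
  finally show ?thesis using that[of "\<lambda>i. c i / 2"] c(2) by auto
qed

lemma pos_coroot:
  assumes "\<beta> = (\<Sum>i=1..r. c i *\<^sub>R \<alpha> i)" "\<forall>i\<in>{1..r}. c i \<ge> 0" "\<beta> \<noteq> 0"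
  shows "\<exists>d. coroot \<beta> = (\<Sum>i=1..r. d i *\<^sub>R coroot (\<alpha> i)) \<and> (\<forall>i\<in>{1..r}. d i \<ge> 0)"
proof (intro exI conjI)
  let ?d = "\<lambda>i. c i * (\<alpha> i \<bullet> \<alpha> i) / (\<beta> \<bullet> \<beta>)"
  show "\<forall>i\<in>{1..r}. ?d i \<ge> 0" using assms(2) by auto
  have "(\<Sum>i=1..r. ?d i *\<^sub>R coroot (\<alpha> i)) = (\<Sum>i=1..r. (2 / (\<beta> \<bullet> \<beta>)) *\<^sub>R (c i *\<^sub>R \<alpha> i))"
    by (rule sum.cong) (auto simp: coroot_def simple_nz)
  also have "\<dots> = coroot \<beta>" by (simp add: coroot_def assms(1) scaleR_sum_right)
  finally show "coroot \<beta> = (\<Sum>i=1..r. ?d i *\<^sub>R coroot (\<alpha> i))" by simp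
qed

lemma simple_obtuse:
  assumes "i \<in> {1..r}" "j \<in> {1..r}" "i \<noteq> j" shows "\<alpha> j \<bullet> \<alpha> i \<le> 0"
proof -
  let ?t = "\<alpha> j \<bullet> coroot (\<alpha> i)"
  have "refl (\<alpha> i) (\<alpha> j) \<in> \<Phi>" using refl_closed simple_in assms by auto
  then obtain c where c: "refl (\<alpha> i) (\<alpha> j) = (\<Sum>k=1..r. c k *\<^sub>R \<alpha> k)"
    "(\<forall>k\<in>{1..r}. c k \<ge> 0) \<or> (\<forall>k\<in>{1..r}. c k \<le> 0)" by (rule expansion)
  let ?d = "\<lambda>k. (if k = j then 1 else 0) - (if k = i then ?t else 0)"
  have "refl (\<alpha> i) (\<alpha> j) = (\<Sum>k=1..r. ?d k *\<^sub>R \<alpha> k)"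
    using assms by (simp add: refl_def scaleR_diff_left sum_subtractf sdelta)
  with c(1) have eq: "(\<Sum>k=1..r. c k *\<^sub>R \<alpha> k) = (\<Sum>k=1..r. ?d k *\<^sub>R \<alpha> k)" by simp
  have "\<And>k. k \<in> {1..r} \<Longrightarrow> c k = ?d k" using coeff_unique[OF eq] by blast
  then have cj: "c j = 1" and ci: "c i = - ?t" using assms by auto
  with c(2) assms have "- ?t \<ge> 0" by force
  then have "?t \<le> 0" by simp
  moreover have "\<alpha> i \<bullet> \<alpha> i > 0" using simple_nz[OF assms(1)] by simp
  ultimately show ?thesis by (simp add: coroot_def divide_le_0_iff zero_le_mult_iff mult_le_0_iff)
qed

lemma inner_pres_refl: "a \<in> \<Phi> \<Longrightarrow> refl a x \<bullet> refl a y = x \<bullet> y"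
  using refl_inner nonzero by blast

lemma theta_dominant:
  assumes "i \<in> {1..r}" shows "\<theta> \<bullet> \<alpha> i \<ge> 0"
proof -
  have ai: "\<alpha> i \<in> \<Phi>" using simple_in assms by auto
  have "refl (\<alpha> i) \<theta> \<in> \<Phi>" using refl_closed ai theta_in by auto
  then obtain c where c: "coroot \<theta> - coroot (refl (\<alpha> i) \<theta>) = (\<Sum>k=1..r. c k *\<^sub>R coroot (\<alpha> k))" "\<forall>k. c k \<ge> 0"
    by (rule highest)
  have "coroot (refl (\<alpha> i) \<theta>) = refl (\<alpha> i) (coroot \<theta>)"
    by (rule coroot_lin[OF linear_refl inner_pres_refl[OF ai]])
  then have "coroot \<theta> - coroot (refl (\<alpha> i) \<theta>) = (coroot \<theta> \<bullet> \<alpha> i) *\<^sub>R coroot (\<alpha> i)"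
    by (simp add: refl_alt)
  also have "\<dots> = (\<Sum>k=1..r. (if k = i then coroot \<theta> \<bullet> \<alpha> i else 0) *\<^sub>R coroot (\<alpha> k))"
    using assms by (simp add: sdelta)
  finally have eq: "(\<Sum>k=1..r. c k *\<^sub>R coroot (\<alpha> k)) = (\<Sum>k=1..r. (if k = i then coroot \<theta> \<bullet> \<alpha> i else 0) *\<^sub>R coroot (\<alpha> k))"
    using c(1) by simp
  have "c i = coroot \<theta> \<bullet> \<alpha> i" using coroot_coeff_unique[OF eq assms] by simp
  moreover have "c i \<ge> 0" using c(2) by blast
  ultimately have "coroot \<theta> \<bullet> \<alpha> i \<ge> 0" by simp
  moreover have "\<theta> \<bullet> \<theta> > 0" using nonzero[OF theta_in] by simp
  ultimately show ?thesis by (simp add: coroot_def zero_le_divide_iff zero_le_mult_iff)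
qed

lemma theta_not_neg_simple:
  assumes "i \<in> {1..r}" shows "\<theta> \<noteq> - \<alpha> i"
proof
  assume th: "\<theta> = - \<alpha> i"
  obtain c where c: "coroot \<theta> - coroot (\<alpha> i) = (\<Sum>k=1..r. c k *\<^sub>R coroot (\<alpha> k))" "\<forall>k. c k \<ge> 0"
    using highest simple_in assms by blast
  have "coroot \<theta> - coroot (\<alpha> i) = (\<Sum>k=1..r. (if k = i then -2 else 0) *\<^sub>R coroot (\<alpha> k))"
    using assms th by (simp add: coroot_neg sdelta scaleR_2)
  then have eq: "(\<Sum>k=1..r. c k *\<^sub>R coroot (\<alpha> k)) = (\<Sum>k=1..r. (if k = i then -2 else 0) *\<^sub>R coroot (\<alpha> k))"
    using c(1) by simp
  have "c i = -2" using coroot_coeff_unique[OF eq assms] by simp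
  moreover have "c i \<ge> 0" using c(2) by blast
  ultimately show False by simp
qed

end


lemma coroot_scale: "c \<noteq> 0 \<Longrightarrow> coroot (c *\<^sub>R x) = (1 / c) *\<^sub>R coroot (x::'a::euclidean_space)"
  by (simp add: coroot_def power2_eq_square field_simps)

context affsys begin

definition sroot :: "nat \<Rightarrow> 'a" where "sroot i = aff_simple \<alpha> \<theta> i"
definition cc :: "nat \<Rightarrow> real" where "cc i = (if i = 0 then -1 else 0)"
definition aroot :: "nat \<Rightarrow> 'a \<times> real" where "aroot i = (coroot (sroot i), cc i)"
definition raff :: "nat \<Rightarrow> 'a \<times> real \<Rightarrow> 'a \<times> real" where
  "raff i x = x - (fst x \<bullet> sroot i) *\<^sub>R aroot i"
definition act :: "nat list \<Rightarrow> 'a \<times> real \<Rightarrow> 'a \<times> real" where "act w x = foldr raff w x"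
definition ev :: "'a \<times> real \<Rightarrow> 'a \<Rightarrow> real" where "ev x l = l \<bullet> fst x - snd x"
definition AR :: "('a \<times> real) set" where "AR = {(coroot \<beta>, of_int k) | \<beta> k. \<beta> \<in> \<Phi>}"
definition pos :: "'a \<times> real \<Rightarrow> bool" where
  "pos x \<longleftrightarrow> (\<exists>n. (\<forall>i\<in>{0..r}. n i \<ge> 0) \<and> x = (\<Sum>i=0..r. n i *\<^sub>R aroot i))"
definition lin :: "nat list \<Rightarrow> 'a \<Rightarrow> 'a" where "lin w = foldr (\<circ>) (map (gen_lin \<alpha> \<theta>) w) id"
abbreviation elem where "elem \<equiv> word_elem \<alpha> \<theta>"
abbreviation wd :: "nat list \<Rightarrow> bool" where "wd w \<equiv> set w \<subseteq> {0..r}"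

lemma sroot_in: "i \<le> r \<Longrightarrow> sroot i \<in> \<Phi>"
  using simple_in theta_in neg_closed by (auto simp: sroot_def aff_simple_def)
lemma sroot_nz: "i \<le> r \<Longrightarrow> sroot i \<noteq> 0" using sroot_in nonzero by blast
lemma sroot_pos: "i \<in> {1..r} \<Longrightarrow> sroot i = \<alpha> i" by (auto simp: sroot_def aff_simple_def)
lemma sroot_0: "sroot 0 = - \<theta>" by (simp add: sroot_def aff_simple_def)

lemma gen_eq: "gen \<alpha> \<theta> i = aff_refl (sroot i) (cc i)"
  by (simp add: gen_def sroot_def cc_def aff_simple_def)
lemma gen_lin_eq: "gen_lin \<alpha> \<theta> i = refl (sroot i)"
  by (simp add: gen_lin_def sroot_def)
lemma gen_invol: "i \<le> r \<Longrightarrow> gen \<alpha> \<theta> i (gen \<alpha> \<theta> i x) = x"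
  by (simp add: gen_eq aff_refl_invol sroot_nz)
lemma gen_affine: "gen \<alpha> \<theta> i x = refl (sroot i) x + gen \<alpha> \<theta> i 0"
  by (simp add: gen_eq aff_refl_lin refl_def)
lemma gen_ev: "gen \<alpha> \<theta> i l = l - ev (aroot i) l *\<^sub>R sroot i"
  by (simp add: gen_eq aff_refl_def ev_def aroot_def)

lemma elem_Nil: "elem [] = id" by (simp add: word_elem_def)
lemma elem_Cons: "elem (i # w) = gen \<alpha> \<theta> i \<circ> elem w" by (simp add: word_elem_def)
lemma elem_append: "elem (u @ w) = elem u \<circ> elem w"
  by (induction u) (auto simp: elem_Nil elem_Cons)
lemma lin_Nil: "lin [] = id" by (simp add: lin_def)
lemma lin_Cons: "lin (i # w) = refl (sroot i) \<circ> lin w" by (simp add: lin_def gen_lin_eq)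
lemma lin_append: "lin (u @ w) = lin u \<circ> lin w"
  by (induction u) (auto simp: lin_Nil lin_Cons)
lemma lin_snoc: "lin (w @ [i]) = lin w \<circ> refl (sroot i)"
  by (simp add: lin_append lin_Cons lin_Nil)
lemma elem_snoc: "elem (w @ [i]) = elem w \<circ> gen \<alpha> \<theta> i"
  by (simp add: elem_append elem_Cons elem_Nil)

lemma lin_linear: "linear (lin w)"
proof (induction w)
  case Nil then show ?case unfolding lin_Nil by (rule linear_id)
next
  case (Cons i w) then show ?case unfolding lin_Cons by (rule linear_compose[OF _ linear_refl])
qed

lemma lin_add: "lin w (x + y) = lin w x + lin w y" using lin_linear linear_add by blast
lemma lin_scale: "lin w (c *\<^sub>R x) = c *\<^sub>R lin w x" using lin_linear linear_scale by blast
lemma lin_diff: "lin w (x - y) = lin w x - lin w y" using lin_linear linear_diff by blast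
lemma lin_neg: "lin w (- x) = - lin w x" using lin_linear linear_neg by blast

lemma lin_inner: "wd w \<Longrightarrow> lin w x \<bullet> lin w y = x \<bullet> y"
  by (induction w arbitrary: x y) (auto simp: lin_Nil lin_Cons refl_inner sroot_nz)

lemma lin_Phi: "wd w \<Longrightarrow> \<beta> \<in> \<Phi> \<Longrightarrow> lin w \<beta> \<in> \<Phi>"
  by (induction w) (auto simp: lin_Nil lin_Cons refl_closed sroot_in)

lemma coroot_lin_w: "wd w \<Longrightarrow> coroot (lin w x) = lin w (coroot x)"
  by (rule coroot_lin[OF lin_linear lin_inner])

lemma lin_rev: "wd w \<Longrightarrow> lin (rev w) (lin w x) = x"
  by (induction w arbitrary: x) (auto simp: lin_Nil lin_Cons lin_snoc refl_refl sroot_nz)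
lemma lin_rev2: "wd w \<Longrightarrow> lin w (lin (rev w) x) = x"
  using lin_rev[of "rev w"] by simp

lemma elem_rev: "wd w \<Longrightarrow> elem (rev w) (elem w x) = x"
  by (induction w arbitrary: x) (auto simp: elem_Nil elem_Cons elem_snoc gen_invol)
lemma elem_rev2: "wd w \<Longrightarrow> elem w (elem (rev w) x) = x"
  using elem_rev[of "rev w"] by simp

lemma elem_affine: "elem w x = lin w x + elem w 0"
proof (induction w arbitrary: x)
  case Nil then show ?case by (simp add: elem_Nil lin_Nil)
next
  case (Cons i w)
  have "elem (i # w) x = gen \<alpha> \<theta> i (lin w x + elem w 0)" using Cons.IH[of x] by (simp add: elem_Cons)
  also have "\<dots> = refl (sroot i) (lin w x) + refl (sroot i) (elem w 0) + gen \<alpha> \<theta> i 0"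
    using gen_affine[of i "lin w x + elem w 0"] by (simp add: refl_add)
  also have "elem (i # w) 0 = refl (sroot i) (elem w 0) + gen \<alpha> \<theta> i 0"
    by (simp add: elem_Cons gen_affine[of i "elem w 0"])
  ultimately show ?case by (simp add: lin_Cons)
qed

lemma elem_eq_lin: "elem w = elem w' \<Longrightarrow> lin w = lin w'"
proof
  fix x assume "elem w = elem w'"
  then show "lin w x = lin w' x" using elem_affine[of w x] elem_affine[of w' x] elem_affine[of w 0] by simp
qed

lemma raff_fst: "fst (raff i x) = refl (sroot i) (fst x)"
  by (simp add: raff_def aroot_def refl_alt)
lemma act_Nil: "act [] x = x" by (simp add: act_def)
lemma act_Cons: "act (i # w) x = raff i (act w x)" by (simp add: act_def)
lemma act_append: "act (u @ w) x = act u (act w x)" by (simp add: act_def)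
lemma act_snoc: "act (w @ [i]) x = act w (raff i x)" by (simp add: act_def)
lemma act_fst: "fst (act w x) = lin w (fst x)"
  by (induction w) (auto simp: act_Nil act_Cons lin_Nil lin_Cons raff_fst)

lemma ev_raff: "i \<le> r \<Longrightarrow> ev (raff i x) (gen \<alpha> \<theta> i l) = ev x l"
proof -
  assume i: "i \<le> r"
  let ?g = "sroot i" let ?a = "aroot i"
  have g: "?g \<bullet> coroot ?g = 2" using inner_coroot_self sroot_nz i by blast
  have e1: "ev (raff i x) m = ev x m - (fst x \<bullet> ?g) * ev ?a m" for m
    by (simp add: ev_def raff_def inner_diff_right algebra_simps)
  have e2: "ev y (gen \<alpha> \<theta> i l) = ev y l - ev ?a l * (fst y \<bullet> ?g)" for y
    by (simp add: gen_ev ev_def inner_diff_right inner_commute algebra_simps)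
  have e3: "ev ?a (gen \<alpha> \<theta> i l) = - ev ?a l"
    using e2[of ?a] g by (simp add: aroot_def inner_commute algebra_simps)
  have "ev (raff i x) (gen \<alpha> \<theta> i l) = ev x (gen \<alpha> \<theta> i l) - (fst x \<bullet> ?g) * ev ?a (gen \<alpha> \<theta> i l)"
    by (rule e1)
  also have "\<dots> = ev x l" unfolding e2[of x] e3 by (simp add: algebra_simps)
  finally show ?thesis .
qed

lemma ev_act: "wd w \<Longrightarrow> ev (act w x) (elem w l) = ev x l"
  by (induction w arbitrary: l) (auto simp: act_Nil act_Cons elem_Nil elem_Cons ev_raff)

lemma ev_inj: assumes "\<And>l. ev x l = ev y l" shows "x = y"
proof -
  have s: "snd x = snd y" using assms[of 0] by (simp add: ev_def)
  have "l \<bullet> (fst x - fst y) = 0" for l using assms[of l] s by (simp add: ev_def inner_diff_right)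
  from this[of "fst x - fst y"] have "fst x = fst y" by simp
  with s show ?thesis by (simp add: prod_eq_iff)
qed

lemma act_welldef:
  assumes "wd w" "wd w'" "elem w = elem w'" shows "act w x = act w' x"
proof (rule ev_inj)
  fix l
  let ?m = "elem (rev w) l"
  have l: "l = elem w ?m" using elem_rev2 assms(1) by simp
  have "ev (act w x) l = ev (act w x) (elem w ?m)" using l by simp
  also have "\<dots> = ev x ?m" using ev_act assms(1) by blast
  also have "\<dots> = ev (act w' x) (elem w' ?m)" using ev_act assms(2) by simp
  also have "\<dots> = ev (act w' x) l" using l assms(3) by simp
  finally show "ev (act w x) l = ev (act w' x) l" .
qed

lemma raff_add: "raff i (x + y) = raff i x + raff i y"
  by (simp add: raff_def inner_add_left algebra_simps)
lemma raff_neg: "raff i (- x) = - raff i x"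
  by (simp add: raff_def algebra_simps)
lemma act_add: "act w (x + y) = act w x + act w y"
  by (induction w) (auto simp: act_Nil act_Cons raff_add)
lemma act_neg: "act w (- x) = - act w x"
  by (induction w) (auto simp: act_Nil act_Cons raff_neg)

lemma raff_self: "i \<le> r \<Longrightarrow> raff i (aroot i) = - aroot i"
proof -
  assume "i \<le> r"
  then have "coroot (sroot i) \<bullet> sroot i = 2" using inner_coroot_self sroot_nz by (metis inner_commute)
  then show ?thesis by (simp add: raff_def aroot_def scaleR_2 algebra_simps)
qed

lemma raff_invol: "i \<le> r \<Longrightarrow> raff i (raff i x) = x"
proof -
  assume i: "i \<le> r"
  have g2: "coroot (sroot i) \<bullet> sroot i = 2" using inner_coroot_self sroot_nz i by (metis inner_commute)
  have "raff i (raff i x) = raff i x - (fst (raff i x) \<bullet> sroot i) *\<^sub>R aroot i" by (simp add: raff_def)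
  also have "fst (raff i x) \<bullet> sroot i = - (fst x \<bullet> sroot i)"
    by (simp add: raff_def aroot_def inner_diff_left g2)
  finally show ?thesis by (simp add: raff_def)
qed

lemma AR_raff: assumes "i \<le> r" "x \<in> AR" shows "raff i x \<in> AR"
proof -
  obtain \<beta> k where x: "x = (coroot \<beta>, of_int k)" "\<beta> \<in> \<Phi>" using assms(2) by (auto simp: AR_def)
  have si: "sroot i \<in> \<Phi>" using sroot_in assms(1) by blast
  have "sroot i \<bullet> coroot \<beta> \<in> \<int>" using integral x(2) si by blast
  then obtain z where z: "sroot i \<bullet> coroot \<beta> = of_int z" by (auto elim: Ints_cases)
  have ccz: "cc i = of_int (if i = 0 then -1 else 0)" by (simp add: cc_def)
  have "fst (raff i x) = coroot (refl (sroot i) \<beta>)"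
    using x by (simp add: raff_fst coroot_lin[OF linear_refl inner_pres_refl[OF si]])
  moreover have "snd (raff i x) = of_int (k - z * (if i = 0 then -1 else 0))"
    using x z ccz by (simp add: raff_def aroot_def inner_commute)
  moreover have "refl (sroot i) \<beta> \<in> \<Phi>" using refl_closed si x(2) by blast
  ultimately have "raff i x = (coroot (refl (sroot i) \<beta>), of_int (k - z * (if i = 0 then -1 else 0)))"
    "refl (sroot i) \<beta> \<in> \<Phi>" by (simp_all add: prod_eq_iff)
  then show ?thesis unfolding AR_def by blast
qed

lemma act_AR: "wd w \<Longrightarrow> x \<in> AR \<Longrightarrow> act w x \<in> AR"
  by (induction w) (auto simp: act_Nil act_Cons AR_raff)

lemma aroot_AR: "i \<le> r \<Longrightarrow> aroot i \<in> AR"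
proof -
  assume "i \<le> r"
  have "aroot i = (coroot (sroot i), of_int (if i = 0 then -1 else 0))" by (simp add: aroot_def cc_def)
  then show ?thesis unfolding AR_def using sroot_in[OF \<open>i \<le> r\<close>] by blast
qed

lemma AR_nz: "x \<in> AR \<Longrightarrow> x \<noteq> 0"
proof
  assume "x \<in> AR" "x = 0"
  then obtain \<beta> k where "x = (coroot \<beta>, of_int k)" "\<beta> \<in> \<Phi>" by (auto simp: AR_def)
  then have "coroot \<beta> = 0" using \<open>x = 0\<close> by (simp add: zero_prod_def)
  then show False using nonzero[OF \<open>\<beta> \<in> \<Phi>\<close>] by (simp add: coroot_zero_iff)
qed

lemma AR_neg: "x \<in> AR \<Longrightarrow> - x \<in> AR"
proof -
  assume "x \<in> AR"
  then obtain \<beta> k where "x = (coroot \<beta>, of_int k)" "\<beta> \<in> \<Phi>" by (auto simp: AR_def)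
  then have "- x = (coroot (- \<beta>), of_int (- k))" "- \<beta> \<in> \<Phi>" by (simp_all add: coroot_neg neg_closed)
  then show ?thesis unfolding AR_def by blast
qed

end


context affsys begin

lemma sum0: "(\<Sum>i=0..r. f i) = f 0 + (\<Sum>i=1..r. f i)"
  by (simp add: sum.atLeast_Suc_atMost)

lemma aroot_0: "aroot 0 = (- coroot \<theta>, -1)"
  by (simp add: aroot_def sroot_0 cc_def coroot_neg)
lemma aroot_pos: "i \<in> {1..r} \<Longrightarrow> aroot i = (coroot (\<alpha> i), 0)"
  by (auto simp: aroot_def sroot_pos cc_def)

lemma sum_aroot: "(\<Sum>i=0..r. n i *\<^sub>R aroot i) = (- n 0 *\<^sub>R coroot \<theta> + (\<Sum>i=1..r. n i *\<^sub>R coroot (\<alpha> i)), - n 0)"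
proof -
  have "(\<Sum>i=1..r. n i *\<^sub>R aroot i) = (\<Sum>i=1..r. (n i *\<^sub>R coroot (\<alpha> i), 0))"
    by (rule sum.cong) (simp_all add: aroot_pos)
  also have "\<dots> = ((\<Sum>i=1..r. n i *\<^sub>R coroot (\<alpha> i)), 0)"
    by (simp add: prod_eq_iff fst_sum snd_sum)
  finally show ?thesis by (simp add: sum0 aroot_0)
qed

lemma indep_aroot:
  assumes "(\<Sum>i=0..r. n i *\<^sub>R aroot i) = 0" "i \<in> {0..r}" shows "n i = 0"
proof -
  from assms(1) have n0: "n 0 = 0" by (simp add: sum_aroot zero_prod_def)
  with assms(1) have eq: "(\<Sum>i=1..r. n i *\<^sub>R coroot (\<alpha> i)) = (\<Sum>i=1..r. 0 *\<^sub>R coroot (\<alpha> i))"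
    by (simp add: sum_aroot zero_prod_def)
  show ?thesis
  proof (cases "i = 0")
    case True then show ?thesis using n0 by simp
  next
    case False then have "i \<in> {1..r}" using assms(2) by auto
    from coroot_coeff_unique[OF eq this] show ?thesis by simp
  qed
qed

lemma pos_kneg:
  assumes "\<beta> \<in> \<Phi>" "k \<le> -1" shows "pos (coroot \<beta>, k)"
proof -
  obtain c where c: "coroot \<theta> - coroot (- \<beta>) = (\<Sum>i=1..r. c i *\<^sub>R coroot (\<alpha> i))" "\<forall>i. c i \<ge> 0"
    using highest[OF neg_closed[OF assms(1)]] by blast
  obtain e where e: "coroot \<theta> = (\<Sum>i=1..r. e i *\<^sub>R coroot (\<alpha> i))" "\<forall>i. e i \<ge> 0"
    by (rule theta_coroot)
  define n where "n = (\<lambda>i. if i = 0 then - k else c i + (- k - 1) * e i)"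
  have nn: "\<forall>i\<in>{0..r}. n i \<ge> 0" using c(2) e(2) assms(2) by (auto simp: n_def add_nonneg_nonneg)
  have "(\<Sum>i=1..r. n i *\<^sub>R coroot (\<alpha> i)) = (\<Sum>i=1..r. c i *\<^sub>R coroot (\<alpha> i) + (- k - 1) *\<^sub>R (e i *\<^sub>R coroot (\<alpha> i)))"
    by (rule sum.cong) (auto simp: n_def algebra_simps)
  also have "\<dots> = (\<Sum>i=1..r. c i *\<^sub>R coroot (\<alpha> i)) + (- k - 1) *\<^sub>R (\<Sum>i=1..r. e i *\<^sub>R coroot (\<alpha> i))"
    by (simp only: sum.distrib scaleR_sum_right)
  also have "\<dots> = (coroot \<theta> + coroot \<beta>) + (- k - 1) *\<^sub>R coroot \<theta>"
    using c(1) e(1) by (simp add: coroot_neg)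
  finally have eq: "(\<Sum>i=0..r. n i *\<^sub>R aroot i) = (coroot \<beta>, k)"
    by (simp add: sum_aroot n_def algebra_simps)
  show ?thesis unfolding pos_def by (intro exI[of _ n] conjI nn eq[symmetric])
qed

lemma pos_k0:
  assumes "\<beta> \<in> \<Phi>" "\<beta> = (\<Sum>i=1..r. c i *\<^sub>R \<alpha> i)" "\<forall>i\<in>{1..r}. c i \<ge> 0" shows "pos (coroot \<beta>, 0)"
proof -
  obtain d where d: "coroot \<beta> = (\<Sum>i=1..r. d i *\<^sub>R coroot (\<alpha> i))" "\<forall>i\<in>{1..r}. d i \<ge> 0"
    using pos_coroot[OF assms(2,3) nonzero[OF assms(1)]] by blast
  define n where "n = (\<lambda>i. if i = 0 then 0 else d i)"
  have nn: "\<forall>i\<in>{0..r}. n i \<ge> 0" using d(2) by (auto simp: n_def)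
  have "(\<Sum>i=1..r. n i *\<^sub>R coroot (\<alpha> i)) = (\<Sum>i=1..r. d i *\<^sub>R coroot (\<alpha> i))"
    by (rule sum.cong) (auto simp: n_def)
  then have eq: "(\<Sum>i=0..r. n i *\<^sub>R aroot i) = (coroot \<beta>, 0)"
    using d(1) by (simp add: sum_aroot n_def)
  show ?thesis unfolding pos_def by (intro exI[of _ n] conjI nn eq[symmetric])
qed

lemma pos_or_neg: assumes "x \<in> AR" shows "pos x \<or> pos (- x)"
proof -
  obtain \<beta> k where x: "x = (coroot \<beta>, of_int k)" and b: "\<beta> \<in> \<Phi>" using assms by (auto simp: AR_def)
  have mx: "- x = (coroot (- \<beta>), of_int (- k))" using x by (simp add: coroot_neg)
  have nb: "- \<beta> \<in> \<Phi>" using neg_closed b by blast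
  consider "k < 0" | "k > 0" | "k = 0" by linarith
  then show ?thesis
  proof cases
    case 1 then have "real_of_int k \<le> -1" by simp
    then show ?thesis using pos_kneg[OF b] x by simp
  next
    case 2 then have "real_of_int (- k) \<le> -1" by simp
    then show ?thesis using pos_kneg[OF nb] mx by simp
  next
    case 3
    obtain c where c: "\<beta> = (\<Sum>i=1..r. c i *\<^sub>R \<alpha> i)" "(\<forall>i\<in>{1..r}. c i \<ge> 0) \<or> (\<forall>i\<in>{1..r}. c i \<le> 0)"
      using expansion[OF b] by blast
    from c(2) show ?thesis
    proof
      assume "\<forall>i\<in>{1..r}. c i \<ge> 0"
      then show ?thesis using pos_k0[OF b c(1)] x 3 by simp
    next
      assume "\<forall>i\<in>{1..r}. c i \<le> 0"
      then have h2: "\<forall>i\<in>{1..r}. - c i \<ge> 0" by auto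
      have h1: "- \<beta> = (\<Sum>i=1..r. (- c i) *\<^sub>R \<alpha> i)" using c(1) by (simp add: sum_negf)
      have "pos (coroot (- \<beta>), 0)" by (rule pos_k0[OF nb h1 h2])
      then show ?thesis using mx 3 by simp
    qed
  qed
qed

lemma pos_not_both: assumes "pos x" "pos (- x)" shows "x = 0"
proof -
  obtain n where n: "\<forall>i\<in>{0..r}. n i \<ge> 0" "x = (\<Sum>i=0..r. n i *\<^sub>R aroot i)" using assms(1) pos_def by blast
  obtain m where m: "\<forall>i\<in>{0..r}. m i \<ge> 0" "- x = (\<Sum>i=0..r. m i *\<^sub>R aroot i)" using assms(2) pos_def by blast
  have "(\<Sum>i=0..r. (n i + m i) *\<^sub>R aroot i) = x + - x" using n(2) m(2) by (simp add: scaleR_add_left sum.distrib)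
  then have "(\<Sum>i=0..r. (n i + m i) *\<^sub>R aroot i) = 0" by simp
  then have "\<forall>i\<in>{0..r}. n i + m i = 0" using indep_aroot[of "\<lambda>i. n i + m i"] by blast
  then have "\<forall>i\<in>{0..r}. n i = 0"
  proof (intro ballI)
    fix i assume "\<forall>i\<in>{0..r}. n i + m i = 0" "i \<in> {0..r}"
    then have "n i + m i = 0" "n i \<ge> 0" "m i \<ge> 0" using n(1) m(1) by auto
    then show "n i = 0" by linarith
  qed
  then show ?thesis using n(2) by simp
qed

lemma pos_add: assumes "pos x" "pos y" shows "pos (x + y)"
proof -
  obtain n where n: "\<forall>i\<in>{0..r}. n i \<ge> 0" "x = (\<Sum>i=0..r. n i *\<^sub>R aroot i)" using assms(1) pos_def by blast
  obtain m where m: "\<forall>i\<in>{0..r}. m i \<ge> 0" "y = (\<Sum>i=0..r. m i *\<^sub>R aroot i)" using assms(2) pos_def by blast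
  have eq: "x + y = (\<Sum>i=0..r. (n i + m i) *\<^sub>R aroot i)" using n(2) m(2) by (simp add: scaleR_add_left sum.distrib)
  have nn: "\<forall>i\<in>{0..r}. n i + m i \<ge> 0" using n(1) m(1) by auto
  show ?thesis unfolding pos_def by (intro exI[of _ "\<lambda>i. n i + m i"] conjI nn eq)
qed

lemma pos_aroot: assumes "j \<le> r" shows "pos (aroot j)"
proof -
  have "aroot j = (\<Sum>i=0..r. (if i = j then 1 else 0) *\<^sub>R aroot i)" using assms by (simp add: sdelta)
  then show ?thesis unfolding pos_def by (intro exI[of _ "\<lambda>i. if i = j then 1 else 0"]) auto
qed

lemma AR_not_pos_both: "x \<in> AR \<Longrightarrow> pos x \<Longrightarrow> \<not> pos (- x)"
  using pos_not_both AR_nz by blast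

lemma pos_raff:
  assumes j: "j \<le> r" and x: "x \<in> AR" "pos x" "x \<noteq> aroot j" shows "pos (raff j x)"
proof (rule ccontr)
  assume np: "\<not> pos (raff j x)"
  have "raff j x \<in> AR" using AR_raff j x(1) by blast
  then have "pos (- raff j x)" using pos_or_neg np by blast
  then obtain m where m: "\<forall>i\<in>{0..r}. m i \<ge> 0" "- raff j x = (\<Sum>i=0..r. m i *\<^sub>R aroot i)" using pos_def by blast
  obtain n where n: "\<forall>i\<in>{0..r}. n i \<ge> 0" "x = (\<Sum>i=0..r. n i *\<^sub>R aroot i)" using x(2) pos_def by blast
  let ?t = "fst x \<bullet> sroot j"
  have "(\<Sum>i=0..r. (n i + m i - (if i = j then ?t else 0)) *\<^sub>R aroot i)
      = x + (- raff j x) - ?t *\<^sub>R aroot j"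
    using n(2) m(2) j by (simp add: scaleR_add_left scaleR_diff_left sum.distrib sum_subtractf sdelta)
  also have "\<dots> = 0" by (simp add: raff_def)
  finally have z: "\<forall>i\<in>{0..r}. n i + m i - (if i = j then ?t else 0) = 0"
    using indep_aroot[of "\<lambda>i. n i + m i - (if i = j then ?t else 0)"] by blast
  have n0: "\<forall>i\<in>{0..r}. i \<noteq> j \<longrightarrow> n i = 0"
  proof (intro ballI impI)
    fix i assume "i \<in> {0..r}" "i \<noteq> j"
    then have "n i + m i = 0" using z by force
    moreover have "n i \<ge> 0" "m i \<ge> 0" using n(1) m(1) \<open>i \<in> {0..r}\<close> by auto
    ultimately show "n i = 0" by linarith
  qed
  have "x = (\<Sum>i=0..r. (if i = j then n j else 0) *\<^sub>R aroot i)"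
    unfolding n(2) by (rule sum.cong) (use n0 in auto)
  then have xe: "x = n j *\<^sub>R aroot j" using j by (simp add: sdelta)
  obtain \<beta> k where xb: "x = (coroot \<beta>, of_int k)" and b: "\<beta> \<in> \<Phi>" using x(1) by (auto simp: AR_def)
  have nj0: "n j \<noteq> 0" using xe AR_nz[OF x(1)] by auto
  have cb: "coroot \<beta> = n j *\<^sub>R coroot (sroot j)" using xe xb by (simp add: aroot_def prod_eq_iff)
  have "\<beta> = coroot (coroot \<beta>)" using coroot_coroot[OF nonzero[OF b]] by simp
  also have "\<dots> = (1 / n j) *\<^sub>R sroot j" using cb coroot_scale[OF nj0, of "coroot (sroot j)"] coroot_coroot[OF sroot_nz[OF j]] by simp
  finally have "sroot j = n j *\<^sub>R \<beta>" using nj0 by simp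
  moreover have "sroot j \<in> \<Phi>" by (rule sroot_in[OF j])
  ultimately have "n j *\<^sub>R \<beta> \<in> \<Phi>" by simp
  then have "n j = 1 \<or> n j = -1" using reduced b by blast
  moreover have "n j \<ge> 0" using n(1) j by auto
  ultimately have "n j = 1" by auto
  then show False using xe x(3) by simp
qed

lemma conj_gen:
  assumes w: "wd w" and ij: "i \<le> r" "j \<le> r" and e: "act w (aroot j) = aroot i"
  shows "elem w (gen \<alpha> \<theta> j l) = gen \<alpha> \<theta> i (elem w l)"
proof -
  let ?e = "ev (aroot j) l"
  have "elem w (gen \<alpha> \<theta> j l) = lin w (gen \<alpha> \<theta> j l) + elem w 0" by (rule elem_affine)
  also have "\<dots> = lin w (l - ?e *\<^sub>R sroot j) + elem w 0" by (simp only: gen_ev)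
  also have "\<dots> = elem w l - ?e *\<^sub>R lin w (sroot j)"
    using elem_affine[of w l] by (simp add: lin_diff lin_scale)
  finally have 1: "elem w (gen \<alpha> \<theta> j l) = elem w l - ?e *\<^sub>R lin w (sroot j)" .
  have 2: "ev (aroot i) (elem w l) = ?e" using ev_act[OF w, of "aroot j" l] e by simp
  have 3: "lin w (sroot j) = sroot i"
  proof -
    have "coroot (lin w (sroot j)) = coroot (sroot i)"
      using act_fst[of w "aroot j"] e coroot_lin_w[OF w] by (simp add: aroot_def)
    then have "coroot (coroot (lin w (sroot j))) = coroot (coroot (sroot i))" by simp
    moreover have "lin w (sroot j) \<noteq> 0" using lin_Phi[OF w sroot_in[OF ij(2)]] nonzero by blast
    ultimately show ?thesis using coroot_coroot[OF sroot_nz[OF ij(1)]] coroot_coroot[of "lin w (sroot j)"] by simp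
  qed
  show ?thesis by (simp only: 1 gen_ev[of i] 2 3)
qed

end


context affsys begin

definition reduced :: "nat list \<Rightarrow> bool" where
  "reduced w \<longleftrightarrow> wd w \<and> (\<forall>w'. wd w' \<longrightarrow> elem w' = elem w \<longrightarrow> length w \<le> length w')"

lemma deletion:
  assumes "wd w" "j \<le> r" "\<not> pos (act w (aroot j))"
  shows "\<exists>p<length w. elem (take p w @ drop (Suc p) w) = elem w \<circ> gen \<alpha> \<theta> j"
  using assms
proof (induction w)
  case Nil then show ?case using pos_aroot by (simp add: act_Nil)
next
  case (Cons i w)
  have i: "i \<le> r" and w: "wd w" using Cons.prems(1) by auto
  show ?case
  proof (cases "pos (act w (aroot j))")
    case False
    then obtain p where p: "p < length w" "elem (take p w @ drop (Suc p) w) = elem w \<circ> gen \<alpha> \<theta> j"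
      using Cons.IH w Cons.prems(2) by blast
    have "take (Suc p) (i # w) @ drop (Suc (Suc p)) (i # w) = i # (take p w @ drop (Suc p) w)" by simp
    then have "elem (take (Suc p) (i # w) @ drop (Suc (Suc p)) (i # w)) = elem (i # w) \<circ> gen \<alpha> \<theta> j"
      using p(2) by (simp add: elem_Cons comp_assoc)
    then show ?thesis using p(1) by (intro exI[of _ "Suc p"]) simp
  next
    case True
    have "\<not> pos (raff i (act w (aroot j)))" using Cons.prems(3) by (simp add: act_Cons)
    then have e: "act w (aroot j) = aroot i"
      using pos_raff[OF i act_AR[OF w aroot_AR[OF Cons.prems(2)]] True] by blast
    have "elem w = elem (i # w) \<circ> gen \<alpha> \<theta> j"
    proof
      fix l
      show "elem w l = (elem (i # w) \<circ> gen \<alpha> \<theta> j) l"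
        using conj_gen[OF w i Cons.prems(2) e, of l] gen_invol[OF i] by (simp add: elem_Cons)
    qed
    then show ?thesis by (intro exI[of _ 0]) simp
  qed
qed

lemma reducedD: "reduced w \<Longrightarrow> wd w' \<Longrightarrow> elem w' = elem w \<Longrightarrow> length w \<le> length w'"
  by (simp add: reduced_def)
lemma reduced_wd: "reduced w \<Longrightarrow> wd w" by (simp add: reduced_def)

lemma reduced_same_length: "reduced a \<Longrightarrow> reduced b \<Longrightarrow> elem a = elem b \<Longrightarrow> length a = length b"
  using reducedD[of a b] reducedD[of b a] reduced_wd[of a] reduced_wd[of b] by fastforce

lemma reduced_Nil: "reduced []" by (simp add: reduced_def)

lemma wd_del: "wd w \<Longrightarrow> wd (take p w @ drop (Suc p) w)"
  using set_take_subset[of p w] set_drop_subset[of "Suc p" w] by auto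

lemma length_del: "p < length w \<Longrightarrow> length (take p w @ drop (Suc p) w) = length w - 1"
  by simp

lemma reduced_snoc:
  assumes red: "reduced w" and j: "j \<le> r" and p: "pos (act w (aroot j))"
  shows "reduced (w @ [j])"
  unfolding reduced_def
proof (intro conjI allI impI)
  show "wd (w @ [j])" using reduced_wd[OF red] j by auto
  fix w' assume w': "wd w'" "elem w' = elem (w @ [j])"
  have wj: "wd (w @ [j])" using reduced_wd[OF red] j by auto
  have "act w' (aroot j) = act (w @ [j]) (aroot j)" by (rule act_welldef[OF w'(1) wj w'(2)])
  also have "\<dots> = - act w (aroot j)" using raff_self[OF j] by (simp add: act_snoc act_neg)
  finally have "\<not> pos (act w' (aroot j))"
    using AR_not_pos_both[OF act_AR[OF reduced_wd[OF red] aroot_AR[OF j]] p] by simp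
  then obtain q where q: "q < length w'" "elem (take q w' @ drop (Suc q) w') = elem w' \<circ> gen \<alpha> \<theta> j"
    using deletion[OF w'(1) j] by blast
  have "elem w' \<circ> gen \<alpha> \<theta> j = elem w"
    using w'(2) gen_invol[OF j] by (auto simp: elem_snoc)
  then have "length w \<le> length (take q w' @ drop (Suc q) w')"
    using reducedD[OF red wd_del[OF w'(1)]] q(2) by simp
  then show "length (w @ [j]) \<le> length w'" using q(1) by simp
qed

lemma reduced_snoc_pos:
  assumes red: "reduced (w @ [j])" shows "pos (act w (aroot j))"
proof (rule ccontr)
  assume np: "\<not> pos (act w (aroot j))"
  have w: "wd w" and j: "j \<le> r" using reduced_wd[OF red] by auto
  obtain q where q: "q < length w" "elem (take q w @ drop (Suc q) w) = elem w \<circ> gen \<alpha> \<theta> j"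
    using deletion[OF w j np] by blast
  have "length (w @ [j]) \<le> length (take q w @ drop (Suc q) w)"
    using reducedD[OF red wd_del[OF w]] q(2) by (simp add: elem_snoc)
  then show False using q(1) by simp
qed

lemma reduced_last_neg:
  assumes red: "reduced (w @ [j])" shows "pos (- act (w @ [j]) (aroot j))"
proof -
  have j: "j \<le> r" using reduced_wd[OF red] by auto
  have "act (w @ [j]) (aroot j) = - act w (aroot j)" using raff_self[OF j] by (simp add: act_snoc act_neg)
  then show ?thesis using reduced_snoc_pos[OF red] by simp
qed

lemma reduced_prefix: assumes "reduced (x @ y)" shows "reduced x"
  unfolding reduced_def
proof (intro conjI allI impI)
  show "wd x" using reduced_wd[OF assms] by auto
  fix x' assume x': "wd x'" "elem x' = elem x"
  have "wd (x' @ y)" using x'(1) reduced_wd[OF assms] by auto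
  moreover have "elem (x' @ y) = elem (x @ y)" using x'(2) by (simp add: elem_append)
  ultimately have "length (x @ y) \<le> length (x' @ y)" using reducedD[OF assms] by blast
  then show "length x \<le> length x'" by simp
qed

lemma reduced_suffix: assumes "reduced (x @ y)" shows "reduced y"
  unfolding reduced_def
proof (intro conjI allI impI)
  show "wd y" using reduced_wd[OF assms] by auto
  fix y' assume y': "wd y'" "elem y' = elem y"
  have "wd (x @ y')" using y'(1) reduced_wd[OF assms] by auto
  moreover have "elem (x @ y') = elem (x @ y)" using y'(2) by (simp add: elem_append)
  ultimately have "length (x @ y) \<le> length (x @ y')" using reducedD[OF assms] by blast
  then show "length y \<le> length y'" by simp
qed

lemma exists_reduced: assumes "wd w" shows "\<exists>\<rho>. reduced \<rho> \<and> elem \<rho> = elem w"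
proof -
  let ?P = "\<lambda>n. \<exists>w'. wd w' \<and> elem w' = elem w \<and> length w' = n"
  have P: "?P (length w)" using assms by blast
  define n where "n = (LEAST n. ?P n)"
  have n1: "?P n" unfolding n_def by (rule LeastI[of ?P, OF P])
  have n2: "\<not> ?P m" if "m < n" for m using not_less_Least[of m ?P] that unfolding n_def by blast
  from n1 obtain w' where w': "wd w'" "elem w' = elem w" "length w' = n" by blast
  have "reduced w'" unfolding reduced_def
  proof (intro conjI allI impI)
    show "wd w'" by (rule w'(1))
    fix v assume v: "wd v" "elem v = elem w'"
    then have "?P (length v)" using w'(2) by auto
    then have "\<not> length v < n" using n2 by blast
    then show "length w' \<le> length v" using w'(3) by simp
  qed
  then show ?thesis using w'(2) by blast
qed

lemma elem_cancel_last: "j \<le> r \<Longrightarrow> elem (a @ [j]) = elem (b @ [j]) \<Longrightarrow> elem a = elem b"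
proof
  fix l assume j: "j \<le> r" and e: "elem (a @ [j]) = elem (b @ [j])"
  have "elem (a @ [j]) (gen \<alpha> \<theta> j l) = elem (b @ [j]) (gen \<alpha> \<theta> j l)" using e by simp
  then show "elem a l = elem b l" by (simp add: elem_snoc gen_invol[OF j])
qed

lemma elem_cancel_first: "j \<le> r \<Longrightarrow> elem (j # a) = elem (j # b) \<Longrightarrow> elem a = elem b"
proof
  fix l assume j: "j \<le> r" and e: "elem (j # a) = elem (j # b)"
  have "gen \<alpha> \<theta> j (elem (j # a) l) = gen \<alpha> \<theta> j (elem (j # b) l)" using e by simp
  then show "elem a l = elem b l" by (simp add: elem_Cons gen_invol[OF j])
qed

end


fun alt :: "nat \<Rightarrow> nat \<Rightarrow> nat \<Rightarrow> nat list" where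
  "alt s t 0 = []"
| "alt s t (Suc n) = s # alt t s n"

lemma alt_length[simp]: "length (alt s t n) = n"
  by (induction n arbitrary: s t) auto

lemma alt_snoc: "alt s t (Suc n) = alt s t n @ [if even n then s else t]"
  by (induction n arbitrary: s t) auto

lemma alt_add: "alt s t (n + k) = alt s t n @ (if even n then alt s t k else alt t s k)"
  by (induction n arbitrary: s t) auto

lemma alt_rev: "rev (alt s t n) = (if even n then alt t s n else alt s t n)"
proof (induction n arbitrary: s t)
  case 0 then show ?case by simp
next
  case (Suc n)
  have "rev (alt s t (Suc n)) = rev (alt t s n) @ [s]" by simp
  also have "\<dots> = (if even n then alt s t n else alt t s n) @ [s]" using Suc.IH[of t s] by simp
  also have "\<dots> = (if even (Suc n) then alt t s (Suc n) else alt s t (Suc n))"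
    unfolding alt_snoc[of s t n] alt_snoc[of t s n] by auto
  finally show ?case .
qed

lemma alt_set: "set (alt s t n) \<subseteq> {s, t}"
  by (induction n arbitrary: s t) auto

lemma alt_take: "j \<le> n \<Longrightarrow> take j (alt s t n) = alt s t j"
proof (induction n arbitrary: s t j)
  case 0 then show ?case by simp
next
  case (Suc n) then show ?case by (cases j) auto
qed

lemma alt_nth: "j < n \<Longrightarrow> alt s t n ! j = (if even j then s else t)"
proof (induction n arbitrary: s t j)
  case 0 then show ?case by simp
next
  case (Suc n) then show ?case by (cases j) auto
qed

lemma alt_palin: "alt s t n @ [if even n then s else t] @ rev (alt s t n) = alt s t (2 * n + 1)"
proof -
  have "alt s t (2 * n + 1) = alt s t (Suc n + n)" by (rule arg_cong[of _ _ "alt s t"]) simp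
  also have "\<dots> = alt s t (Suc n) @ (if even (Suc n) then alt s t n else alt t s n)" by (rule alt_add)
  finally have e: "alt s t (2 * n + 1) = (alt s t n @ [if even n then s else t]) @ (if even (Suc n) then alt s t n else alt t s n)"
    by (simp only: alt_snoc)
  show ?thesis by (subst e) (cases "even n", simp_all del: alt.simps add: alt_rev)
qed

lemma alt_swap_Suc: "alt s t (Suc n) = s # alt t s n" by simp

context affsys begin

lemma wd_alt: "s \<le> r \<Longrightarrow> t \<le> r \<Longrightarrow> wd (alt s t n)"
  using alt_set[of s t n] by auto

lemma word_roots_eq: "word_roots \<alpha> \<theta> w = map (\<lambda>j. lin (take j w) (sroot (w ! j))) [0..<length w]"
  by (simp add: word_roots_def lin_def sroot_def)

lemma word_roots_Nil: "word_roots \<alpha> \<theta> [] = []" by (simp add: word_roots_eq)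

lemma word_roots_snoc: "word_roots \<alpha> \<theta> (w @ [i]) = word_roots \<alpha> \<theta> w @ [lin w (sroot i)]"
proof -
  have "map (\<lambda>j. lin (take j (w @ [i])) (sroot ((w @ [i]) ! j))) [0..<length w]
      = map (\<lambda>j. lin (take j w) (sroot (w ! j))) [0..<length w]"
    by (rule map_cong) (auto simp: nth_append)
  then show ?thesis by (simp add: word_roots_eq)
qed

lemma word_roots_append: "word_roots \<alpha> \<theta> (u @ w) = word_roots \<alpha> \<theta> u @ map (lin u) (word_roots \<alpha> \<theta> w)"
proof (induction w rule: rev_induct)
  case Nil then show ?case by (simp add: word_roots_Nil)
next
  case (snoc i w)
  have "word_roots \<alpha> \<theta> (u @ w @ [i]) = word_roots \<alpha> \<theta> (u @ w) @ [lin (u @ w) (sroot i)]"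
    using word_roots_snoc[of "u @ w" i] by simp
  then show ?case using snoc by (simp add: word_roots_snoc lin_append)
qed

lemma alt_prod_lin: "alt_prod (sroot s) (sroot t) n = lin (alt s t n)"
  by (induction n arbitrary: s t) (auto simp: lin_Nil lin_Cons)

lemma word_roots_alt: "word_roots \<alpha> \<theta> (alt s t n) = map (\<lambda>j. lin (alt s t j) (sroot (if even j then s else t))) [0..<n]"
  unfolding word_roots_eq by (rule map_cong) (auto simp: alt_take alt_nth)

lemma rank2_alt:
  assumes "dihedral_m (sroot s) (sroot t) = n"
  shows "rank2_roots (sroot s) (sroot t) = word_roots \<alpha> \<theta> (alt s t n)"
  unfolding rank2_roots_def assms word_roots_alt alt_prod_lin
  by (rule map_cong) auto

lemma pow_lin: "(refl (sroot s) \<circ> refl (sroot t)) ^^ n = lin (alt s t (2 * n))"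
proof (induction n)
  case 0 then show ?case by (simp add: lin_Nil)
next
  case (Suc n)
  have "alt s t (2 * Suc n) = s # t # alt s t (2 * n)" by (simp add: numeral_2_eq_2)
  then show ?case using Suc by (simp add: lin_Cons comp_assoc)
qed

lemma lin_inv_left: "wd w \<Longrightarrow> lin (rev w) \<circ> lin w = id"
  using lin_rev by (auto simp: fun_eq_iff)
lemma lin_inv_right: "wd w \<Longrightarrow> lin w \<circ> lin (rev w) = id"
  using lin_rev2 by (auto simp: fun_eq_iff)

lemma refl_lin_w: assumes "wd w" shows "refl (lin w \<beta>) = lin w \<circ> refl \<beta> \<circ> lin (rev w)"
proof
  fix x
  have "refl (lin w \<beta>) x = refl (lin w \<beta>) (lin w (lin (rev w) x))" using lin_rev2[OF assms] by simp
  also have "\<dots> = lin w (refl \<beta> (lin (rev w) x))" by (rule refl_conj[OF lin_linear lin_inner[OF assms]])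
  finally show "refl (lin w \<beta>) x = (lin w \<circ> refl \<beta> \<circ> lin (rev w)) x" by simp
qed

lemma refl_lin_root: "wd w \<Longrightarrow> refl (lin w (sroot i)) = lin (w @ [i] @ rev w)"
  by (simp add: refl_lin_w lin_append lin_Cons lin_Nil comp_assoc)

lemma refl_eq_pm:
  assumes "\<beta> \<in> \<Phi>" "\<gamma> \<in> \<Phi>" "refl \<beta> = refl \<gamma>" shows "\<beta> = \<gamma> \<or> \<beta> = - \<gamma>"
proof -
  have "refl \<gamma> \<beta> = - \<beta>" using assms(3) refl_self[OF nonzero[OF assms(1)]] by metis
  then have "\<beta> - (\<beta> \<bullet> coroot \<gamma>) *\<^sub>R \<gamma> = - \<beta>" by (simp add: refl_def)
  then have e2: "2 *\<^sub>R \<beta> = (\<beta> \<bullet> coroot \<gamma>) *\<^sub>R \<gamma>" by (simp add: scaleR_2 algebra_simps)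
  define c where "c = (\<beta> \<bullet> coroot \<gamma>) / 2"
  have "\<beta> = (1/2) *\<^sub>R (2 *\<^sub>R \<beta>)" by simp
  also have "\<dots> = c *\<^sub>R \<gamma>" unfolding e2 c_def by simp
  finally have b: "\<beta> = c *\<^sub>R \<gamma>" .
  then have "c *\<^sub>R \<gamma> \<in> \<Phi>" using assms(1) by simp
  then have "c = 1 \<or> c = -1" using reduced assms(2) by blast
  then show ?thesis using b by auto
qed

end

lemma fold_R_init: fixes R :: "'x \<Rightarrow> 'v \<Rightarrow> 'v" and f :: "'v \<Rightarrow> 'v" shows "fold (\<lambda>\<beta> acc. R \<beta> \<circ> acc) L f = fold (\<lambda>\<beta> acc. R \<beta> \<circ> acc) L id \<circ> f"
proof (induction L arbitrary: f)
  case Nil then show ?case by simp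
next
  case (Cons a L)
  have "fold (\<lambda>\<beta> acc. R \<beta> \<circ> acc) (a # L) f = fold (\<lambda>\<beta> acc. R \<beta> \<circ> acc) L (R a \<circ> f)" by simp
  also have "\<dots> = fold (\<lambda>\<beta> acc. R \<beta> \<circ> acc) L id \<circ> (R a \<circ> f)" by (rule Cons)
  also have "\<dots> = (fold (\<lambda>\<beta> acc. R \<beta> \<circ> acc) L id \<circ> R a) \<circ> f" by (simp only: comp_assoc)
  also have "fold (\<lambda>\<beta> acc. R \<beta> \<circ> acc) L id \<circ> R a = fold (\<lambda>\<beta> acc. R \<beta> \<circ> acc) L (R a)"
    by (rule Cons[of "R a", symmetric])
  also have "\<dots> = fold (\<lambda>\<beta> acc. R \<beta> \<circ> acc) (a # L) id" by simp
  finally show ?case .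
qed

lemma fold_R_rev: fixes R :: "'x \<Rightarrow> 'v \<Rightarrow> 'v" shows "fold (\<lambda>\<beta> acc. R \<beta> \<circ> acc) (rev L) id = fold (\<lambda>\<beta> acc. acc \<circ> R \<beta>) L id"
proof -
  have "fold (\<lambda>\<beta> acc. acc \<circ> R \<beta>) L f = f \<circ> fold (\<lambda>\<beta> acc. R \<beta> \<circ> acc) (rev L) id" for f :: "'v \<Rightarrow> 'v"
  proof (induction L arbitrary: f)
    case Nil then show ?case by simp
  next
    case (Cons a L)
    have "fold (\<lambda>\<beta> acc. R \<beta> \<circ> acc) (rev (a # L)) id = R a \<circ> fold (\<lambda>\<beta> acc. R \<beta> \<circ> acc) (rev L) id"
      by simp
    then show ?case using Cons[of "f \<circ> R a"] by (simp add: comp_assoc)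
  qed
  from this[of id] show ?thesis by simp
qed


context affsys begin

lemma sroot_inj: assumes "s \<le> r" "t \<le> r" "s \<noteq> t" shows "sroot s \<noteq> sroot t"
proof
  assume e: "sroot s = sroot t"
  have inj: "inj_on \<alpha> {1..r}" using sr by (simp add: simple_roots_def)
  show False
  proof (cases "s = 0")
    case True
    then have "t \<in> {1..r}" using assms by auto
    moreover have "- \<theta> = \<alpha> t" using e True \<open>t \<in> {1..r}\<close> by (simp add: sroot_0 sroot_pos)
    then have "\<theta> = - \<alpha> t" by (metis minus_minus)
    ultimately show False using theta_not_neg_simple[of t] by simp
  next
    case s: False
    show False
    proof (cases "t = 0")
      case True
      then have "s \<in> {1..r}" using assms s by auto
      moreover have "\<alpha> s = - \<theta>" using e True \<open>s \<in> {1..r}\<close> by (simp add: sroot_0 sroot_pos)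
      then have "\<theta> = - \<alpha> s" by simp
      ultimately show False using theta_not_neg_simple[of s] by simp
    next
      case False
      then have "s \<in> {1..r}" "t \<in> {1..r}" using assms s by auto
      moreover have "\<alpha> s = \<alpha> t" using e \<open>s \<in> {1..r}\<close> \<open>t \<in> {1..r}\<close> by (simp add: sroot_pos)
      ultimately have "s = t" using inj_onD[OF inj] by blast
      then show False using assms(3) by simp
    qed
  qed
qed

lemma sroot_obtuse: assumes "s \<le> r" "t \<le> r" "s \<noteq> t" shows "sroot s \<bullet> sroot t \<le> 0"
proof (cases "s = 0")
  case True
  then have "t \<in> {1..r}" using assms by auto
  then show ?thesis using True theta_dominant[of t] by (simp add: sroot_0 sroot_pos)
next
  case s: False
  show ?thesis
  proof (cases "t = 0")
    case True
    then have "s \<in> {1..r}" using assms s by auto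
    then show ?thesis using True theta_dominant[of s] by (simp add: sroot_0 sroot_pos inner_commute)
  next
    case False
    then have "s \<in> {1..r}" "t \<in> {1..r}" using assms s by auto
    then show ?thesis using simple_obtuse[of t s] assms(3) by (simp add: sroot_pos)
  qed
qed

lemma aroot_sum_ne: assumes "s \<le> r" "t \<le> r" "s \<noteq> t" shows "aroot s + aroot t \<noteq> 0"
proof
  assume z: "aroot s + aroot t = 0"
  let ?n = "\<lambda>i. (if i = s then 1 else 0) + (if i = t then 1 else (0::real))"
  have "(\<Sum>i=0..r. ?n i *\<^sub>R aroot i) = aroot s + aroot t"
    using assms by (simp add: scaleR_add_left sum.distrib sdelta)
  then have "?n s = 0" using indep_aroot[of ?n s] z assms by simp
  then show False using assms by simp
qed

lemma act_fst0: "fst x = 0 \<Longrightarrow> act w x = x"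
proof (induction w)
  case Nil then show ?case by (simp add: act_Nil)
next
  case (Cons i w) then show ?case by (simp add: act_Cons raff_def)
qed

definition in2 :: "nat \<Rightarrow> nat \<Rightarrow> 'a \<times> real \<Rightarrow> bool" where
  "in2 s t x \<longleftrightarrow> (\<exists>p q. x = p *\<^sub>R aroot s + q *\<^sub>R aroot t)"

lemma in2_add: "in2 s t x \<Longrightarrow> in2 s t y \<Longrightarrow> in2 s t (x + y)"
  unfolding in2_def
proof (elim exE)
  fix p q p' q' assume "x = p *\<^sub>R aroot s + q *\<^sub>R aroot t" "y = p' *\<^sub>R aroot s + q' *\<^sub>R aroot t"
  then have "x + y = (p + p') *\<^sub>R aroot s + (q + q') *\<^sub>R aroot t" by (simp add: algebra_simps)
  then show "\<exists>p q. x + y = p *\<^sub>R aroot s + q *\<^sub>R aroot t" by blast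
qed

lemma in2_neg: "in2 s t x \<Longrightarrow> in2 s t (- x)"
  unfolding in2_def
proof (elim exE)
  fix p q assume "x = p *\<^sub>R aroot s + q *\<^sub>R aroot t"
  then have "- x = (- p) *\<^sub>R aroot s + (- q) *\<^sub>R aroot t" by (simp add: algebra_simps)
  then show "\<exists>p q. - x = p *\<^sub>R aroot s + q *\<^sub>R aroot t" by blast
qed

lemma in2_s: "in2 s t (aroot s)" unfolding in2_def by (intro exI[of _ 1] exI[of _ 0]) simp
lemma in2_t: "in2 s t (aroot t)" unfolding in2_def by (intro exI[of _ 0] exI[of _ 1]) simp
lemma in2_scale: "in2 s t x \<Longrightarrow> in2 s t (c *\<^sub>R x)"
  unfolding in2_def
proof (elim exE)
  fix p q assume "x = p *\<^sub>R aroot s + q *\<^sub>R aroot t"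
  then have "c *\<^sub>R x = (c * p) *\<^sub>R aroot s + (c * q) *\<^sub>R aroot t" by (simp add: algebra_simps)
  then show "\<exists>p q. c *\<^sub>R x = p *\<^sub>R aroot s + q *\<^sub>R aroot t" by blast
qed

lemma in2_raff: "i \<in> {s, t} \<Longrightarrow> in2 s t x \<Longrightarrow> in2 s t (raff i x)"
proof -
  assume i: "i \<in> {s, t}" and x: "in2 s t x"
  have "in2 s t (aroot i)" using i in2_s in2_t by auto
  then have "in2 s t (- ((fst x \<bullet> sroot i) *\<^sub>R aroot i))" by (intro in2_neg in2_scale)
  from in2_add[OF x this] show ?thesis by (simp add: raff_def)
qed

lemma in2_act: "set w \<subseteq> {s, t} \<Longrightarrow> in2 s t x \<Longrightarrow> in2 s t (act w x)"
  by (induction w) (auto simp: act_Nil act_Cons intro: in2_raff)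

lemma indep2:
  assumes st: "s \<le> r" "t \<le> r" "s \<noteq> t" and nn: "sroot t \<noteq> - sroot s"
    and z: "p *\<^sub>R sroot s + q *\<^sub>R sroot t = 0"
  shows "p = 0 \<and> q = 0"
proof (cases "q = 0")
  case True
  have "p *\<^sub>R sroot s = 0" using z True by simp
  then show ?thesis using sroot_nz[OF st(1)] True by simp
next
  case False
  have "q *\<^sub>R sroot t = - (p *\<^sub>R sroot s)" using z by (simp add: eq_neg_iff_add_eq_0 add.commute)
  then have "(1 / q) *\<^sub>R (q *\<^sub>R sroot t) = (1 / q) *\<^sub>R (- (p *\<^sub>R sroot s))" by simp
  then have "sroot t = (- p / q) *\<^sub>R sroot s" using False by simp
  then have "(- p / q) *\<^sub>R sroot s \<in> \<Phi>" using sroot_in[OF st(2)] by simp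
  then have "- p / q = 1 \<or> - p / q = -1" using reduced sroot_in[OF st(1)] by blast
  then have "sroot t = sroot s \<or> sroot t = - sroot s" using \<open>sroot t = _\<close> by auto
  then show ?thesis using sroot_inj[OF st] nn by auto
qed

lemma in2_fst0:
  assumes st: "s \<le> r" "t \<le> r" "s \<noteq> t" and nn: "sroot t \<noteq> - sroot s"
    and x: "in2 s t x" and f: "fst x = 0"
  shows "x = 0"
proof -
  obtain p q where pq: "x = p *\<^sub>R aroot s + q *\<^sub>R aroot t" using x in2_def by blast
  have "fst x = (p * (2 / (sroot s \<bullet> sroot s))) *\<^sub>R sroot s + (q * (2 / (sroot t \<bullet> sroot t))) *\<^sub>R sroot t"
    using pq by (simp add: aroot_def coroot_def)
  then have e: "(p * (2 / (sroot s \<bullet> sroot s))) *\<^sub>R sroot s + (q * (2 / (sroot t \<bullet> sroot t))) *\<^sub>R sroot t = 0"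
    using f by simp
  have "p * (2 / (sroot s \<bullet> sroot s)) = 0 \<and> q * (2 / (sroot t \<bullet> sroot t)) = 0" by (rule indep2[OF st nn e])
  then have "p = 0" "q = 0" using sroot_nz st by auto
  then show ?thesis using pq by simp
qed

lemma lin_alt_2k:
  assumes st: "s \<le> r" "t \<le> r" and e: "lin (alt s t k) = lin (alt t s k)"
  shows "lin (alt s t (2 * k)) = id"
proof -
  have w1: "wd (alt s t k)" and w2: "wd (alt t s k)" using wd_alt st by auto
  have "alt s t (2 * k) = alt s t (k + k)" by (rule arg_cong[of _ _ "alt s t"]) simp
  also have "\<dots> = alt s t k @ (if even k then alt s t k else alt t s k)" by (rule alt_add)
  finally have a: "alt s t (2 * k) = alt s t k @ (if even k then alt s t k else alt t s k)" .
  show ?thesis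
  proof (cases "even k")
    case True
    then have "rev (alt t s k) = alt s t k" by (simp add: alt_rev)
    then have "lin (alt s t k) \<circ> lin (alt s t k) = lin (rev (alt t s k)) \<circ> lin (alt t s k)" using e by simp
    also have "\<dots> = id" by (rule lin_inv_left[OF w2])
    finally show ?thesis using a True by (simp add: lin_append)
  next
    case False
    then have "rev (alt t s k) = alt t s k" by (simp add: alt_rev)
    then have "lin (alt s t k) \<circ> lin (alt t s k) = lin (rev (alt t s k)) \<circ> lin (alt t s k)" using e by simp
    also have "\<dots> = id" by (rule lin_inv_left[OF w2])
    finally show ?thesis using a False by (simp add: lin_append)
  qed
qed

lemma dihedral_eq: "dihedral_m (sroot s) (sroot t) = (LEAST n. 0 < n \<and> lin (alt s t (2 * n)) = id)"
  unfolding dihedral_m_def pow_lin by simp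

lemma lin_alt_sym:
  assumes st: "s \<le> r" "t \<le> r" shows "lin (alt s t (2 * n)) = id \<longleftrightarrow> lin (alt t s (2 * n)) = id"
proof -
  have r1: "rev (alt s t (2 * n)) = alt t s (2 * n)" by (simp add: alt_rev)
  have r2: "rev (alt t s (2 * n)) = alt s t (2 * n)" by (simp add: alt_rev)
  have "lin (rev w) = id" if "lin w = id" "wd w" for w
    using lin_inv_left[OF that(2)] that(1) by simp
  then show ?thesis using r1 r2 wd_alt st by metis
qed

lemma dihedral_sym: "s \<le> r \<Longrightarrow> t \<le> r \<Longrightarrow> dihedral_m (sroot t) (sroot s) = dihedral_m (sroot s) (sroot t)"
  unfolding dihedral_eq using lin_alt_sym by simp

lemma last_neg_alt:
  assumes red: "reduced (alt s t (Suc k))"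
  shows "pos (- act (alt s t (Suc k)) (aroot (if even k then s else t)))"
  using reduced_last_neg[of "alt s t k" "if even k then s else t"] red by (simp add: alt_snoc[symmetric])

lemma braid_not_neg:
  assumes st: "s \<le> r" "t \<le> r" "s \<noteq> t" and r1: "reduced (alt s t k)" and r2: "reduced (alt t s k)"
    and e: "elem (alt s t k) = elem (alt t s k)" and k: "k \<ge> 1"
  shows "sroot t \<noteq> - sroot s"
proof
  assume nn: "sroot t = - sroot s"
  obtain k' where k': "k = Suc k'" using k by (cases k) auto
  let ?w = "alt s t k"
  have w1: "wd ?w" and w2: "wd (alt t s k)" using wd_alt st by auto
  have a1: "pos (- act ?w (aroot (if even k' then s else t)))" using last_neg_alt r1 k' by simp
  have a2: "pos (- act (alt t s k) (aroot (if even k' then t else s)))" using last_neg_alt r2 k' by simp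
  have eqa: "act (alt t s k) x = act ?w x" for x using act_welldef[OF w2 w1 e[symmetric]] .
  have ps: "pos (- act ?w (aroot s))" and pt: "pos (- act ?w (aroot t))"
    using a1 a2 eqa by (cases "even k'"; simp)+
  have "fst (aroot s + aroot t) = 0" using nn by (simp add: aroot_def coroot_neg)
  then have "act ?w (aroot s + aroot t) = aroot s + aroot t" by (rule act_fst0)
  then have h: "act ?w (aroot s) + act ?w (aroot t) = aroot s + aroot t" by (simp add: act_add)
  have "- (aroot s + aroot t) = - act ?w (aroot s) + - act ?w (aroot t)"
    by (simp only: h[symmetric] minus_add_distrib)
  then have "pos (- (aroot s + aroot t))" using pos_add[OF ps pt] by simp
  moreover have "pos (aroot s + aroot t)" using pos_add pos_aroot st by blast
  ultimately have "aroot s + aroot t = 0" using pos_not_both by blast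
  then show False using aroot_sum_ne[OF st] by simp
qed

lemma alt_prefix: "j \<le> k \<Longrightarrow> \<exists>rest. alt s t k = alt s t j @ rest"
proof -
  assume "j \<le> k"
  then have "alt s t k = alt s t (j + (k - j))" by simp
  then show ?thesis using alt_add[of s t j "k - j"] by auto
qed

lemma reduced_alt_prefix: "reduced (alt s t k) \<Longrightarrow> j \<le> k \<Longrightarrow> reduced (alt s t j)"
  using alt_prefix reduced_prefix by metis

lemma pos_alt_root:
  assumes "reduced (alt s t k)" "j < k"
  shows "pos (act (alt s t j) (aroot (if even j then s else t)))"
proof -
  have "reduced (alt s t (Suc j))" by (rule reduced_alt_prefix[OF assms(1)]) (use assms(2) in simp)
  then have "reduced (alt s t j @ [if even j then s else t])" by (simp only: alt_snoc)
  then show ?thesis by (rule reduced_snoc_pos)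
qed

lemma fst_act_aroot: "wd w \<Longrightarrow> fst (act w (aroot i)) = coroot (lin w (sroot i))"
  by (simp add: act_fst aroot_def coroot_lin_w)

lemma act_alt_AR: "s \<le> r \<Longrightarrow> t \<le> r \<Longrightarrow> i \<le> r \<Longrightarrow> act (alt s t j) (aroot i) \<in> AR"
  using act_AR wd_alt aroot_AR by blast

lemma in2_act_alt: "i \<in> {s, t} \<Longrightarrow> in2 s t (act (alt s t j) (aroot i))"
  by (rule in2_act[OF alt_set]) (auto simp: in2_s in2_t)
lemma in2_act_alt': "i \<in> {s, t} \<Longrightarrow> in2 s t (act (alt t s j) (aroot i))"
  by (rule in2_act) (use alt_set[of t s j] in auto, auto simp: in2_s in2_t)

lemma braid_k_le_m:
  assumes st: "s \<le> r" "t \<le> r" "s \<noteq> t" and nn: "sroot t \<noteq> - sroot s"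
    and r1: "reduced (alt s t k)" and m: "0 < m" "lin (alt s t (2 * m)) = id"
  shows "k \<le> m"
proof (rule ccontr)
  assume "\<not> k \<le> m"
  then have mk: "m < k" by simp
  let ?c = "if even m then s else t"
  have c: "?c \<le> r" "?c \<in> {s, t}" using st by auto
  let ?g = "act (alt s t m) (aroot ?c)"
  have pg: "pos ?g" using pos_alt_root[OF r1 mk] .
  have wm: "wd (alt s t m)" using wd_alt st by auto
  let ?l = "lin (alt s t m) (sroot ?c)"
  have "refl ?l = lin (alt s t m @ [?c] @ rev (alt s t m))" by (rule refl_lin_root[OF wm])
  also have "\<dots> = lin (alt s t (2 * m + 1))" by (simp only: alt_palin)
  also have "alt s t (2 * m + 1) = alt s t (2 * m) @ [s]" using alt_snoc[of s t "2 * m"] by simp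
  finally have "refl ?l = refl (sroot s)" using m(2) by (simp add: lin_append lin_Cons lin_Nil)
  then have l: "?l = sroot s \<or> ?l = - sroot s"
    using refl_eq_pm lin_Phi[OF wm sroot_in[OF c(1)]] sroot_in[OF st(1)] by blast
  have fg: "fst ?g = coroot ?l" using fst_act_aroot[OF wm] .
  have i2: "in2 s t ?g" using in2_act_alt c(2) by blast
  have as: "pos (aroot s)" using pos_aroot st by blast
  have nzs: "aroot s \<noteq> 0" using AR_nz aroot_AR st by blast
  from l show False
  proof
    assume "?l = sroot s"
    then have "fst (?g + - aroot s) = 0" using fg by (simp add: aroot_def)
    moreover have "in2 s t (?g + - aroot s)" using in2_add[OF i2 in2_neg[OF in2_s]] .
    ultimately have "?g + - aroot s = 0" using in2_fst0[OF st nn] by blast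
    then have g: "?g = aroot s" by (simp add: add_eq_0_iff2)
    obtain m' where m': "m = Suc m'" using m(1) by (cases m) auto
    have "?g = raff s (act (alt t s m') (aroot ?c))" using m' by (simp add: act_Cons)
    then have "act (alt t s m') (aroot ?c) = raff s (aroot s)" using g raff_invol[OF st(1)] by metis
    then have neg: "act (alt t s m') (aroot ?c) = - aroot s" using raff_self[OF st(1)] by simp
    have "reduced (alt s t (Suc m))" by (rule reduced_alt_prefix[OF r1]) (use mk in simp)
    then have "reduced ([s] @ alt t s m)" by (simp only: alt_swap_Suc append_Cons append_Nil)
    then have "reduced (alt t s m)" by (rule reduced_suffix)
    moreover have "alt t s m = alt t s m' @ [if even m' then t else s]" by (simp only: m' alt_snoc)
    ultimately have "reduced (alt t s m' @ [if even m' then t else s])" by simp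
    moreover have "(if even m' then t else s) = ?c" using m' by simp
    ultimately have "pos (act (alt t s m') (aroot ?c))" using reduced_snoc_pos by metis
    then have "pos (- aroot s)" using neg by simp
    then show False using pos_not_both[OF as] nzs by blast
  next
    assume "?l = - sroot s"
    then have "fst (?g + aroot s) = 0" using fg by (simp add: aroot_def coroot_neg)
    moreover have "in2 s t (?g + aroot s)" using in2_add[OF i2 in2_s] .
    ultimately have "?g + aroot s = 0" using in2_fst0[OF st nn] by blast
    then have "?g = - aroot s" by (simp add: eq_neg_iff_add_eq_0)
    then have "pos (- aroot s)" using pg by simp
    then show False using pos_not_both[OF as] nzs by blast
  qed
qed

end


context affsys begin

lemma length_word_roots: "length (word_roots \<alpha> \<theta> w) = length w"
  by (simp add: word_roots_eq)

lemma braid_rev: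
  assumes st: "s \<le> r" "t \<le> r" "s \<noteq> t" and nn: "sroot t \<noteq> - sroot s"
    and r1: "reduced (alt s t m)" and r2: "reduced (alt t s m)" and m: "lin (alt s t (2 * m)) = id"
  shows "word_roots \<alpha> \<theta> (alt t s m) = rev (word_roots \<alpha> \<theta> (alt s t m))"
proof (rule nth_equalityI)
  show "length (word_roots \<alpha> \<theta> (alt t s m)) = length (rev (word_roots \<alpha> \<theta> (alt s t m)))"
    by (simp add: length_word_roots)
  fix j assume "j < length (word_roots \<alpha> \<theta> (alt t s m))"
  then have j: "j < m" by (simp add: length_word_roots)
  define i where "i = m - 1 - j"
  have i: "i < m" "2 * i + 1 + (2 * j + 1) = 2 * m" using j by (auto simp: i_def)
  let ?c = "if even i then s else t" let ?d = "if even j then t else s"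
  have cr: "?c \<le> r" "?c \<in> {s, t}" and dr: "?d \<le> r" "?d \<in> {s, t}" using st by auto
  let ?l1 = "lin (alt s t i) (sroot ?c)" let ?l2 = "lin (alt t s j) (sroot ?d)"
  have lhs: "word_roots \<alpha> \<theta> (alt t s m) ! j = ?l2" using j by (simp add: word_roots_alt)
  have "rev (word_roots \<alpha> \<theta> (alt s t m)) ! j = word_roots \<alpha> \<theta> (alt s t m) ! i"
    using j by (simp add: rev_nth length_word_roots i_def)
  also have "\<dots> = ?l1" using i by (simp add: word_roots_alt)
  finally have rhs: "rev (word_roots \<alpha> \<theta> (alt s t m)) ! j = ?l1" .
  have wi: "wd (alt s t i)" and wj: "wd (alt t s j)" using wd_alt st by auto
  have w2: "wd (alt t s (2 * j + 1))" using wd_alt st by auto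
  have ref1: "refl ?l1 = lin (alt s t (2 * i + 1))"
    using refl_lin_root[OF wi, of ?c] by (simp only: alt_palin)
  have ref2: "refl ?l2 = lin (alt t s (2 * j + 1))"
    using refl_lin_root[OF wj, of ?d] by (simp only: alt_palin)
  have "alt s t (2 * m) = alt s t ((2 * i + 1) + (2 * j + 1))" using i(2) by simp
  also have "\<dots> = alt s t (2 * i + 1) @ alt t s (2 * j + 1)" by (simp only: alt_add) (simp del: alt.simps)
  finally have "lin (alt s t (2 * i + 1)) \<circ> lin (alt t s (2 * j + 1)) = id" using m by (simp del: alt.simps add: lin_append)
  moreover have "lin (alt t s (2 * j + 1)) \<circ> lin (alt t s (2 * j + 1)) = id"
    using lin_inv_left[OF w2] by (simp del: alt.simps add: alt_rev)
  ultimately have "lin (alt s t (2 * i + 1)) = lin (alt t s (2 * j + 1))"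
    by (metis comp_id comp_assoc)
  then have "refl ?l1 = refl ?l2" using ref1 ref2 by simp
  then have l12: "?l1 = ?l2 \<or> ?l1 = - ?l2"
    using refl_eq_pm lin_Phi[OF wi sroot_in[OF cr(1)]] lin_Phi[OF wj sroot_in[OF dr(1)]] by blast
  have "?l1 = ?l2"
  proof (rule ccontr)
    assume "?l1 \<noteq> ?l2"
    then have neg: "?l1 = - ?l2" using l12 by blast
    let ?g1 = "act (alt s t i) (aroot ?c)" let ?g2 = "act (alt t s j) (aroot ?d)"
    have p1: "pos ?g1" using pos_alt_root[OF r1 i(1)] .
    have p2: "pos ?g2" using pos_alt_root[OF r2 j] .
    have "fst (?g1 + ?g2) = coroot ?l1 + coroot ?l2"
      using fst_act_aroot[OF wi] fst_act_aroot[OF wj] by simp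
    also have "\<dots> = 0" using neg by (simp add: coroot_neg)
    finally have f0: "fst (?g1 + ?g2) = 0" .
    have "in2 s t (?g1 + ?g2)" using in2_add[OF in2_act_alt[OF cr(2)] in2_act_alt'[OF dr(2)]] .
    then have "?g1 + ?g2 = 0" using in2_fst0[OF st nn] f0 by blast
    then have "?g1 = - ?g2" by (simp add: eq_neg_iff_add_eq_0)
    then have "pos (- ?g2)" using p1 by simp
    then have "?g2 = 0" using pos_not_both[OF p2] by blast
    then show False using AR_nz act_alt_AR st dr(1) by blast
  qed
  then show "word_roots \<alpha> \<theta> (alt t s m) ! j = rev (word_roots \<alpha> \<theta> (alt s t m)) ! j"
    using lhs rhs by simp
qed

lemma alt_prod_conj:
  assumes u: "wd u" shows "alt_prod (lin u a) (lin u b) n (lin u x) = lin u (alt_prod a b n x)"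
proof (induction n arbitrary: a b x)
  case 0 then show ?case by simp
next
  case (Suc n)
  have "alt_prod (lin u a) (lin u b) (Suc n) (lin u x) = refl (lin u a) (lin u (alt_prod b a n x))"
    using Suc[of b a x] by simp
  also have "\<dots> = lin u (refl a (alt_prod b a n x))" by (rule refl_conj[OF lin_linear lin_inner[OF u]])
  finally show ?case by simp
qed

lemma funpow_conj:
  assumes u: "wd u"
  shows "((refl (lin u a) \<circ> refl (lin u b)) ^^ n) y = lin u (((refl a \<circ> refl b) ^^ n) (lin (rev u) y))"
proof (induction n arbitrary: y)
  case 0 then show ?case using lin_rev2[OF u] by simp
next
  case (Suc n)
  let ?z = "((refl a \<circ> refl b) ^^ n) (lin (rev u) y)"
  have "((refl (lin u a) \<circ> refl (lin u b)) ^^ Suc n) y = refl (lin u a) (refl (lin u b) (((refl (lin u a) \<circ> refl (lin u b)) ^^ n) y))"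
    by simp
  also have "\<dots> = refl (lin u a) (refl (lin u b) (lin u ?z))" by (simp only: Suc.IH)
  also have "\<dots> = lin u (refl a (refl b ?z))"
    using refl_conj[OF lin_linear lin_inner[OF u]] by simp
  also have "\<dots> = lin u (((refl a \<circ> refl b) ^^ Suc n) (lin (rev u) y))" by simp
  finally show ?case .
qed

lemma dihedral_conj:
  assumes u: "wd u" shows "dihedral_m (lin u a) (lin u b) = dihedral_m a b"
proof -
  have "(refl (lin u a) \<circ> refl (lin u b)) ^^ n = id \<longleftrightarrow> (refl a \<circ> refl b) ^^ n = id" for n
  proof
    assume h: "(refl (lin u a) \<circ> refl (lin u b)) ^^ n = id"
    show "(refl a \<circ> refl b) ^^ n = id"
    proof
      fix z
      have "((refl (lin u a) \<circ> refl (lin u b)) ^^ n) (lin u z) = lin u z" using h by simp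
      then have "lin u (((refl a \<circ> refl b) ^^ n) z) = lin u z" using funpow_conj[OF u, where a=a and b=b and n=n and y="lin u z"] lin_rev[OF u] by simp
      then have "lin (rev u) (lin u (((refl a \<circ> refl b) ^^ n) z)) = lin (rev u) (lin u z)" by simp
      then show "((refl a \<circ> refl b) ^^ n) z = id z" using lin_rev[OF u] by simp
    qed
  next
    assume h: "(refl a \<circ> refl b) ^^ n = id"
    show "(refl (lin u a) \<circ> refl (lin u b)) ^^ n = id"
    proof
      fix y show "((refl (lin u a) \<circ> refl (lin u b)) ^^ n) y = id y"
        using funpow_conj[OF u, where a=a and b=b and n=n and y=y] h lin_rev2[OF u] by simp
    qed
  qed
  then show ?thesis unfolding dihedral_m_def by simp
qed

lemma rank2_conj:
  assumes u: "wd u" shows "rank2_roots (lin u a) (lin u b) = map (lin u) (rank2_roots a b)"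
  unfolding rank2_roots_def dihedral_conj[OF u]
  by (simp add: alt_prod_conj[OF u, symmetric] if_distrib[of "lin u"])

end


locale affR = affsys \<Phi> r \<alpha> \<theta> for \<Phi> :: "'a::euclidean_space set" and r \<alpha> \<theta> +
  fixes R :: "'a \<Rightarrow> 'v \<Rightarrow> 'v"
  assumes Rbij: "\<And>a. a \<in> \<Phi> \<Longrightarrow> bij (R a)"
    and Rneg: "\<And>a. a \<in> \<Phi> \<Longrightarrow> R (- a) = inv (R a)"
    and YB: "\<And>a b. a \<in> \<Phi> \<Longrightarrow> b \<in> \<Phi> \<Longrightarrow> a \<bullet> b \<le> 0 \<Longrightarrow> b \<noteq> - a \<Longrightarrow>
      fold (\<lambda>\<gamma> acc. acc \<circ> R \<gamma>) (rank2_roots a b) id = fold (\<lambda>\<gamma> acc. R \<gamma> \<circ> acc) (rank2_roots a b) id"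
begin

abbreviation op :: "nat list \<Rightarrow> 'v \<Rightarrow> 'v" where "op w \<equiv> word_operator R \<alpha> \<theta> w"

lemma op_append: "op (u @ w) = fold (\<lambda>\<beta> acc. R \<beta> \<circ> acc) (map (lin u) (word_roots \<alpha> \<theta> w)) id \<circ> op u"
proof -
  have "op (u @ w) = fold (\<lambda>\<beta> acc. R \<beta> \<circ> acc) (map (lin u) (word_roots \<alpha> \<theta> w)) (op u)"
    by (simp add: word_operator_def word_roots_append)
  then show ?thesis by (simp only: fold_R_init[of R _ "op u"])
qed

lemma op_snoc: "op (w @ [i]) = R (lin w (sroot i)) \<circ> op w"
proof -
  have "word_roots \<alpha> \<theta> [i] = [sroot i]" by (simp add: word_roots_eq lin_Nil)
  then show ?thesis by (simp add: op_append)
qed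

lemma R_cancel: "a \<in> \<Phi> \<Longrightarrow> R (- a) \<circ> R a = id"
  using Rneg Rbij bij_is_inj inv_o_cancel by metis

lemma braid:
  assumes st: "s \<le> r" "t \<le> r" "s \<noteq> t" and r1: "reduced (alt s t k)" and r2: "reduced (alt t s k)"
    and e: "elem (alt s t k) = elem (alt t s k)" and u: "wd u"
  shows "op (u @ alt s t k) = op (u @ alt t s k)"
proof (cases "k = 0")
  case True then show ?thesis by simp
next
  case False
  then have k1: "k \<ge> 1" by simp
  have nn: "sroot t \<noteq> - sroot s" by (rule braid_not_neg[OF st r1 r2 e k1])
  have "lin (alt s t k) = lin (alt t s k)" using elem_eq_lin[OF e] .
  then have l2k: "lin (alt s t (2 * k)) = id" using lin_alt_2k st by blast
  let ?P = "\<lambda>n. 0 < n \<and> lin (alt s t (2 * n)) = id"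
  define m where "m = dihedral_m (sroot s) (sroot t)"
  have md: "m = (LEAST n. ?P n)" unfolding m_def by (rule dihedral_eq)
  have Pk: "?P k" using k1 l2k by simp
  have Pm: "?P m" unfolding md by (rule LeastI[of ?P, OF Pk])
  have "m \<le> k" unfolding md by (rule Least_le[of ?P, OF Pk])
  moreover have "k \<le> m" using braid_k_le_m[OF st nn r1] Pm by blast
  ultimately have mk: "m = k" by simp
  have rk: "rank2_roots (sroot s) (sroot t) = word_roots \<alpha> \<theta> (alt s t k)"
    by (rule rank2_alt) (use mk m_def in simp)
  have rv: "word_roots \<alpha> \<theta> (alt t s k) = rev (word_roots \<alpha> \<theta> (alt s t k))"
    by (rule braid_rev[OF st nn r1 r2 l2k])
  let ?L = "lin u"
  let ?a = "?L (sroot s)" let ?b = "?L (sroot t)"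
  have ra: "rank2_roots ?a ?b = map ?L (word_roots \<alpha> \<theta> (alt s t k))"
    using rank2_conj[OF u] rk by simp
  have aP: "?a \<in> \<Phi>" and bP: "?b \<in> \<Phi>" using lin_Phi[OF u] sroot_in st by auto
  have ab: "?a \<bullet> ?b \<le> 0" using lin_inner[OF u] sroot_obtuse[OF st] by simp
  have bna: "?b \<noteq> - ?a"
  proof
    assume "?b = - ?a"
    then have "lin (rev u) ?b = lin (rev u) (?L (- sroot s))" by (simp add: lin_neg)
    then have "sroot t = - sroot s" using lin_rev[OF u] by simp
    then show False using nn by simp
  qed
  have "op (u @ alt t s k) = fold (\<lambda>\<beta> acc. R \<beta> \<circ> acc) (map ?L (rev (word_roots \<alpha> \<theta> (alt s t k)))) id \<circ> op u"
    by (simp add: op_append rv)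
  also have "\<dots> = fold (\<lambda>\<beta> acc. R \<beta> \<circ> acc) (rev (rank2_roots ?a ?b)) id \<circ> op u"
    by (simp add: ra rev_map)
  also have "\<dots> = fold (\<lambda>\<gamma> acc. acc \<circ> R \<gamma>) (rank2_roots ?a ?b) id \<circ> op u"
    by (simp only: fold_R_rev)
  also have "\<dots> = fold (\<lambda>\<gamma> acc. R \<gamma> \<circ> acc) (rank2_roots ?a ?b) id \<circ> op u"
    by (simp only: YB[OF aP bP ab bna])
  also have "\<dots> = op (u @ alt s t k)" by (simp add: op_append ra)
  finally show ?thesis by simp
qed

lemma reduced_len:
  assumes "reduced A" "wd W" "elem W = elem A" "length W = length A" shows "reduced W"
  unfolding reduced_def
proof (intro conjI allI impI)
  show "wd W" by (rule assms(2))
  fix w' assume "wd w'" "elem w' = elem W"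
  then have "length A \<le> length w'" using reducedD[OF assms(1)] assms(3) by simp
  then show "length W \<le> length w'" using assms(4) by simp
qed

definition IHk :: "nat \<Rightarrow> bool" where
  "IHk k \<longleftrightarrow> (\<forall>A B u. length A < k \<longrightarrow> reduced A \<longrightarrow> reduced B \<longrightarrow> elem A = elem B \<longrightarrow> wd u
      \<longrightarrow> op (u @ A) = op (u @ B))"

lemma IHkD: "IHk k \<Longrightarrow> length A < k \<Longrightarrow> reduced A \<Longrightarrow> reduced B \<Longrightarrow> elem A = elem B \<Longrightarrow> wd u
  \<Longrightarrow> op (u @ A) = op (u @ B)"
  unfolding IHk_def by blast

lemma same_last:
  assumes IH: "IHk k" and rA: "reduced (A @ [x])" and rB: "reduced (B @ [x])"
    and e: "elem (A @ [x]) = elem (B @ [x])" and len: "length (A @ [x]) = k" and u: "wd u"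
  shows "op (u @ A @ [x]) = op (u @ B @ [x])"
proof -
  have x: "x \<le> r" using reduced_wd[OF rA] by auto
  have eAB: "elem A = elem B" by (rule elem_cancel_last[OF x e])
  have "length A < k" using len by simp
  then have "op (u @ A) = op (u @ B)"
    by (rule IHkD[OF IH _ reduced_prefix[OF rA] reduced_prefix[OF rB] eAB u])
  moreover have "lin (u @ A) = lin (u @ B)" using elem_eq_lin[OF eAB] by (simp add: lin_append)
  ultimately show ?thesis using op_snoc[of "u @ A" x] op_snoc[of "u @ B" x] by simp
qed

lemma same_first:
  assumes IH: "IHk k" and rA: "reduced (c # A)" and rB: "reduced (c # B)"
    and e: "elem (c # A) = elem (c # B)" and len: "length (c # A) = k" and u: "wd u"
  shows "op (u @ c # A) = op (u @ c # B)"
proof -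
  have c: "c \<le> r" using reduced_wd[OF rA] by auto
  have eAB: "elem A = elem B" by (rule elem_cancel_first[OF c e])
  have ra: "reduced A" using reduced_suffix[of "[c]" A] rA by simp
  have rb: "reduced B" using reduced_suffix[of "[c]" B] rB by simp
  have "wd (u @ [c])" using u c by auto
  moreover have "length A < k" using len by simp
  ultimately have "op ((u @ [c]) @ A) = op ((u @ [c]) @ B)"
    using IHkD[OF IH _ ra rb eAB] by blast
  then show ?thesis by simp
qed

lemma not_pos_last:
  assumes "reduced (A @ [x])" shows "\<not> pos (act (A @ [x]) (aroot x))"
proof -
  have x: "x \<le> r" and w: "wd (A @ [x])" using reduced_wd[OF assms] by auto
  have "pos (- act (A @ [x]) (aroot x))" by (rule reduced_last_neg[OF assms])
  moreover have "act (A @ [x]) (aroot x) \<in> AR" using act_AR[OF w aroot_AR[OF x]] .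
  ultimately show ?thesis using pos_not_both AR_nz by blast
qed

lemma chain:
  assumes IH: "IHk k" and rA: "reduced (A' @ [x])" and rB: "reduced (B' @ [y])"
    and e: "elem (A' @ [x]) = elem (B' @ [y])" and xy: "x \<noteq> y" and len: "length (A' @ [x]) = k"
    and u: "wd u"
  shows "op (u @ A' @ [x]) = op (u @ B' @ [y])"
proof -
  define A where "A = A' @ [x]"
  define B where "B = B' @ [y]"
  define G where "G \<longleftrightarrow> op (u @ A) = op (u @ B)"
  define W where "W n = (if n = 0 then B else drop (n - 1) A @ alt y x (n - 1))" for n :: nat
  define lastl where "lastl n = (if n = 0 then y else if even (n - 1) then x else y)" for n :: nat
  define v where "v = elem A"
  have rA': "reduced A" and rB': "reduced B" using rA rB by (simp_all add: A_def B_def)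
  have x: "x \<le> r" and y: "y \<le> r" using reduced_wd[OF rA] reduced_wd[OF rB] by auto
  have wdA: "wd A" and wdB: "wd B" using reduced_wd[OF rA'] reduced_wd[OF rB'] .
  have eAB: "elem A = elem B" using e by (simp add: A_def B_def)
  have lenA: "length A = k" using len by (simp add: A_def)
  have lenB: "length B = k" using reduced_same_length[OF rA' rB' eAB] lenA by simp
  have k1: "k \<ge> 1" using lenA by (simp add: A_def)
  have nx: "\<not> pos (act A (aroot x))" using not_pos_last[OF rA] by (simp add: A_def)
  have ny: "\<not> pos (act B (aroot y))" using not_pos_last[OF rB] by (simp add: B_def)
  have actBA: "act B z = act A z" for z by (rule act_welldef[OF wdB wdA eAB[symmetric]])
  have neg: "\<not> pos (act w (aroot z))" if "wd w" "elem w = v" "z \<in> {x, y}" for w z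
  proof -
    have "act w (aroot z) = act A (aroot z)" using act_welldef[OF that(1) wdA] that(2) v_def by simp
    then show ?thesis using that(3) nx ny actBA by auto
  qed
  have lastl_in: "lastl n \<in> {x, y}" for n by (simp add: lastl_def)
  have lastl_eq: "lastl (Suc n) = lastl (n - 1)" if "1 \<le> n" for n
    using that by (cases "n = 1") (auto simp: lastl_def)
  have Wlen: "length (W n) = k" if "n \<le> k + 1" for n
    using that lenA lenB by (simp add: W_def)
  have Wwd: "wd (W n)" for n
  proof (cases "n = 0")
    case True then show ?thesis using wdB by (simp add: W_def)
  next
    case False
    have "set (drop (n - 1) A) \<subseteq> {0..r}" by (rule order_trans[OF set_drop_subset wdA])
    moreover have "set (alt y x (n - 1)) \<subseteq> {0..r}" using wd_alt[OF y x] .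
    ultimately show ?thesis using False by (simp add: W_def)
  qed
  have Wlast: "\<exists>P. W n = P @ [lastl n]" if "n \<le> k + 1" for n
  proof (cases n)
    case 0 then show ?thesis by (simp add: W_def B_def lastl_def)
  next
    case (Suc j)
    show ?thesis
    proof (cases j)
      case 0 then show ?thesis using Suc by (simp add: W_def A_def lastl_def)
    next
      case (Suc i)
      have e1: "W n = drop (n - 1) A @ alt y x i @ [if even i then y else x]"
        using \<open>n = Suc j\<close> Suc by (simp add: W_def alt_snoc[of y x i] del: alt.simps)
      have e2: "(if even i then y else x) = lastl n" using \<open>n = Suc j\<close> Suc by (simp add: lastl_def)
      show ?thesis using e1 e2 by (intro exI[of _ "drop (n - 1) A @ alt y x i"]) simp
    qed
  qed
  have Wstep: "W (Suc n) = tl (W n) @ [lastl (Suc n)]" if h: "1 \<le> n" "n \<le> k" for n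
  proof -
    have "n - 1 < length A" using h lenA by simp
    then have "drop (n - 1) A \<noteq> []" by simp
    then have "tl (W n) = tl (drop (n - 1) A) @ alt y x (n - 1)" using h by (simp add: W_def)
    also have "tl (drop (n - 1) A) = drop n A" using h by (simp add: drop_Suc[symmetric] tl_drop)
    finally have t: "tl (W n) = drop n A @ alt y x (n - 1)" .
    obtain j where j: "n = Suc j" using h(1) by (cases n) auto
    have "alt y x n = alt y x j @ [if even j then y else x]" using j alt_snoc[of y x j] by (simp del: alt.simps)
    moreover have "(if even j then y else x) = lastl (Suc n)" using j by (simp add: lastl_def)
    ultimately show ?thesis using t j by (simp add: W_def del: alt.simps)
  qed
  have inv: "1 \<le> n \<Longrightarrow> n \<le> k + 1 \<Longrightarrow> G \<or> (reduced (W n) \<and> elem (W n) = v \<and> reduced (W (n - 1))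
      \<and> elem (W (n - 1)) = v \<and> (op (u @ W n) = op (u @ W (n - 1)) \<longrightarrow> G))" for n
  proof (induction n)
    case 0 then show ?case by simp
  next
    case (Suc n)
    show ?case
    proof (cases "n = 0")
      case True
      have "W (Suc n) = A" "W n = B" using True by (simp_all add: W_def)
      then show ?thesis using rA' rB' eAB v_def G_def True by simp
    next
      case False
      then have n1: "1 \<le> n" "n \<le> k" using Suc.prems by auto
      from Suc.IH[OF n1(1)] n1(2) have "G \<or> (reduced (W n) \<and> elem (W n) = v \<and> reduced (W (n - 1))
        \<and> elem (W (n - 1)) = v \<and> (op (u @ W n) = op (u @ W (n - 1)) \<longrightarrow> G))" by simp
      then show ?thesis
      proof
        assume "G" then show ?thesis by simp
      next
        assume I: "reduced (W n) \<and> elem (W n) = v \<and> reduced (W (n - 1))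
          \<and> elem (W (n - 1)) = v \<and> (op (u @ W n) = op (u @ W (n - 1)) \<longrightarrow> G)"
        let ?z = "lastl (Suc n)"
        have z2: "?z \<in> {x, y}" by (rule lastl_in)
        then have z: "?z \<le> r" "?z \<in> {x, y}" using x y by auto
        have np: "\<not> pos (act (W n) (aroot ?z))" using neg[OF Wwd] I z(2) by blast
        obtain p where p: "p < length (W n)"
          "elem (take p (W n) @ drop (Suc p) (W n)) = elem (W n) \<circ> gen \<alpha> \<theta> ?z"
          using deletion[OF Wwd z(1) np] by blast
        define D where "D = take p (W n) @ drop (Suc p) (W n)"
        have Dwd: "wd D" unfolding D_def by (rule wd_del[OF Wwd])
        have pD: "elem D = elem (W n) \<circ> gen \<alpha> \<theta> ?z" unfolding D_def by (rule p(2))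
        have "elem (D @ [?z]) = elem (W n) \<circ> gen \<alpha> \<theta> ?z \<circ> gen \<alpha> \<theta> ?z" by (simp only: elem_snoc pD)
        also have "\<dots> = elem (W n)" using gen_invol[OF z(1)] by (simp add: fun_eq_iff)
        finally have W'e: "elem (D @ [?z]) = v" using I by simp
        have W'len: "length (D @ [?z]) = k" using p(1) Wlen[of n] n1 by (simp add: D_def)
        have rW': "reduced (D @ [?z])"
          by (rule reduced_len[OF rA']) (use Dwd z W'e W'len lenA v_def in auto)
        have "n - 1 \<le> k + 1" using n1 by simp
        then obtain P where P0: "W (n - 1) = P @ [lastl (n - 1)]" using Wlast by blast
        then have P: "W (n - 1) = P @ [?z]" using lastl_eq[OF n1(1)] by simp
        have s1: "op (u @ D @ [?z]) = op (u @ P @ [?z])"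
          by (rule same_last[OF IH rW']) (use I P W'e W'len u in auto)
        show ?thesis
        proof (cases "p = 0")
          case True
          then have "D = tl (W n)" by (simp add: D_def drop_Suc)
          then have DW: "D @ [?z] = W (Suc n)" using Wstep[OF n1] by simp
          have "op (u @ W (Suc n)) = op (u @ W n) \<longrightarrow> G"
            using I s1 DW P by auto
          then show ?thesis using rW' W'e DW I by auto
        next
          case False
          obtain c rest where cr: "W n = c # rest" using Wlen[of n] n1 k1 by (cases "W n") auto
          have Dc: "D @ [?z] = c # (take (p - 1) rest @ drop p rest @ [?z])"
            using False cr by (cases p) (auto simp: D_def)
          have "op (u @ c # (take (p - 1) rest @ drop p rest @ [?z])) = op (u @ c # rest)"
            by (rule same_first[OF IH]) (use rW' Dc I cr W'e W'len u in auto)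
          then have "op (u @ W n) = op (u @ W (n - 1))" using s1 Dc cr P by simp
          then show ?thesis using I by simp
        qed
      qed
    qed
  qed
  have "G \<or> (reduced (W (k + 1)) \<and> elem (W (k + 1)) = v \<and> reduced (W k)
      \<and> elem (W k) = v \<and> (op (u @ W (k + 1)) = op (u @ W k) \<longrightarrow> G))" using inv[of "k + 1"] by simp
  then have G
  proof
    assume I: "reduced (W (k + 1)) \<and> elem (W (k + 1)) = v \<and> reduced (W k)
      \<and> elem (W k) = v \<and> (op (u @ W (k + 1)) = op (u @ W k) \<longrightarrow> G)"
    have W1: "W (k + 1) = alt y x k" using lenA by (simp add: W_def)
    obtain j where j: "k = Suc j" using k1 by (cases k) auto
    have "drop j A = [x]" using lenA j by (simp add: A_def)
    then have W2: "W k = alt x y k" using j by (simp add: W_def)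
    have "op (u @ alt x y k) = op (u @ alt y x k)"
      by (rule braid[OF x y xy]) (use I W1 W2 u in auto)
    then show G using I W1 W2 by simp
  qed
  then show ?thesis by (simp add: G_def A_def B_def)
qed

theorem matsumoto:
  assumes "reduced A" "reduced B" "elem A = elem B" "wd u" shows "op (u @ A) = op (u @ B)"
proof -
  have "IHk k" for k
  proof (induction k rule: less_induct)
    case (less k)
    show "IHk k" unfolding IHk_def
    proof (intro allI impI)
      fix A B u assume h: "length A < k" "reduced A" "reduced B" "elem A = elem B" "wd u"
      have IH: "IHk (length A)" using less h(1) by blast
      show "op (u @ A) = op (u @ B)"
      proof (cases "A = []")
        case True
        then have "length B = 0" using reduced_same_length[OF h(2) h(3) h(4)] by simp
        then show ?thesis using True by simp
      next
        case False
        obtain A' x where A: "A = A' @ [x]" using False by (cases A rule: rev_cases) auto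
        have "length B = length A" using reduced_same_length[OF h(2,3,4)] by simp
        then have "B \<noteq> []" using False by auto
        then obtain B' y where B: "B = B' @ [y]" by (cases B rule: rev_cases) auto
        have rA: "reduced (A' @ [x])" and rB: "reduced (B' @ [y])" and e: "elem (A' @ [x]) = elem (B' @ [y])"
          and len: "length (A' @ [x]) = length A" using h A B by simp_all
        show ?thesis
        proof (cases "x = y")
          case True
          have "op (u @ A' @ [x]) = op (u @ B' @ [x])"
            by (rule same_last[OF IH]) (use rA rB e len True h(5) in simp_all)
          then show ?thesis using A B True by simp
        next
          case False
          have "op (u @ A' @ [x]) = op (u @ B' @ [y])"
            by (rule chain[OF IH rA rB e False len h(5)])
          then show ?thesis using A B by simp
        qed
      qed
    qed
  qed
  then show ?thesis using IHkD[of "Suc (length A)" A B u] assms by simp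
qed

lemma op_reduced: "wd w \<Longrightarrow> \<exists>\<rho>. reduced \<rho> \<and> elem \<rho> = elem w \<and> op w = op \<rho>"
proof (induction w rule: rev_induct)
  case Nil then show ?case using reduced_Nil by blast
next
  case (snoc j w)
  have w: "wd w" and j: "j \<le> r" using snoc.prems by auto
  obtain \<rho> where \<rho>: "reduced \<rho>" "elem \<rho> = elem w" "op w = op \<rho>" using snoc.IH[OF w] by blast
  have wr: "wd \<rho>" using reduced_wd[OF \<rho>(1)] .
  have lin\<rho>: "lin w = lin \<rho>" using elem_eq_lin[OF \<rho>(2)[symmetric]] .
  have opw: "op (w @ [j]) = R (lin \<rho> (sroot j)) \<circ> op \<rho>" using op_snoc[of w j] lin\<rho> \<rho>(3) by simp
  show ?case
  proof (cases "pos (act \<rho> (aroot j))")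
    case True
    have "reduced (\<rho> @ [j])" by (rule reduced_snoc[OF \<rho>(1) j True])
    moreover have "elem (\<rho> @ [j]) = elem (w @ [j])" using \<rho>(2) by (simp add: elem_snoc)
    moreover have "op (w @ [j]) = op (\<rho> @ [j])" using opw op_snoc[of \<rho> j] by simp
    ultimately show ?thesis by blast
  next
    case False
    obtain q where q: "q < length \<rho>" "elem (take q \<rho> @ drop (Suc q) \<rho>) = elem \<rho> \<circ> gen \<alpha> \<theta> j"
      using deletion[OF wr j False] by blast
    define \<rho>' where "\<rho>' = take q \<rho> @ drop (Suc q) \<rho>"
    have wr': "wd \<rho>'" unfolding \<rho>'_def by (rule wd_del[OF wr])
    have q2: "elem \<rho>' = elem \<rho> \<circ> gen \<alpha> \<theta> j" unfolding \<rho>'_def by (rule q(2))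
    have "elem (\<rho>' @ [j]) = elem \<rho> \<circ> gen \<alpha> \<theta> j \<circ> gen \<alpha> \<theta> j" by (simp only: elem_snoc q2)
    also have "\<dots> = elem \<rho>" using gen_invol[OF j] by (simp add: fun_eq_iff)
    finally have e1: "elem (\<rho>' @ [j]) = elem \<rho>" .
    have l1: "length (\<rho>' @ [j]) = length \<rho>" using q(1) by (simp add: \<rho>'_def)
    have wj: "wd (\<rho>' @ [j])" using wr' j by simp
    have r1: "reduced (\<rho>' @ [j])" by (rule reduced_len[OF \<rho>(1) wj e1 l1])
    have r2: "reduced \<rho>'" by (rule reduced_prefix[OF r1])
    have "op ([] @ \<rho>) = op ([] @ (\<rho>' @ [j]))" by (rule matsumoto[OF \<rho>(1) r1 e1[symmetric]]) simp
    then have op\<rho>: "op \<rho> = R (lin \<rho>' (sroot j)) \<circ> op \<rho>'" using op_snoc[of \<rho>' j] by simp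
    have "lin \<rho> = lin (\<rho>' @ [j])" using elem_eq_lin[OF e1[symmetric]] .
    then have lneg: "lin \<rho> (sroot j) = - lin \<rho>' (sroot j)"
      using refl_self[OF sroot_nz[OF j]] by (simp add: lin_snoc lin_neg)
    have \<beta>: "lin \<rho>' (sroot j) \<in> \<Phi>" using lin_Phi[OF wr' sroot_in[OF j]] .
    have "op (w @ [j]) = (R (- lin \<rho>' (sroot j)) \<circ> R (lin \<rho>' (sroot j))) \<circ> op \<rho>'"
      using opw op\<rho> lneg by (simp add: comp_assoc)
    then have "op (w @ [j]) = op \<rho>'" using R_cancel[OF \<beta>] by simp
    moreover have "elem \<rho>' = elem (w @ [j])" using q2 \<rho>(2) by (simp add: elem_snoc)
    ultimately show ?thesis using r2 by blast
  qed
qed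

lemma main: assumes "wd w" "wd w'" "elem w = elem w'" shows "op w = op w'"
proof -
  obtain \<rho> where \<rho>: "reduced \<rho>" "elem \<rho> = elem w" "op w = op \<rho>" using op_reduced[OF assms(1)] by blast
  obtain \<rho>' where \<rho>': "reduced \<rho>'" "elem \<rho>' = elem w'" "op w' = op \<rho>'" using op_reduced[OF assms(2)] by blast
  have "op ([] @ \<rho>) = op ([] @ \<rho>')" by (rule matsumoto[OF \<rho>(1) \<rho>'(1)]) (use \<rho> \<rho>' assms(3) in simp_all)
  then show ?thesis using \<rho>(3) \<rho>'(3) by simp
qed

end

theorem lemma9p3:
  fixes \<Phi> :: "'a::euclidean_space set" and r :: nat and \<alpha> :: "nat \<Rightarrow> 'a" and \<theta> :: 'a
    and sc :: "'k::field \<Rightarrow> 'v::ab_group_add \<Rightarrow> 'v"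
    and R :: "'a \<Rightarrow> 'v \<Rightarrow> 'v"
    and w w' :: "nat list"
  assumes "irreducible_root_system \<Phi>"
    and "simple_roots \<Phi> r \<alpha>"
    and "highest_coroot_root \<Phi> r \<alpha> \<theta>"
    and "vector_space sc"
    and "R_matrix sc \<Phi> R"
    and "set w \<subseteq> {0..r}" and "set w' \<subseteq> {0..r}"
    and "word_elem \<alpha> \<theta> w = word_elem \<alpha> \<theta> w'"
  shows "word_operator R \<alpha> \<theta> w = word_operator R \<alpha> \<theta> w'"
proof -
  have rs: "root_system \<Phi>" using assms(1) by (simp add: irreducible_root_system_def)
  have Rm: "\<forall>a\<in>\<Phi>. Vector_Spaces.linear sc sc (R a) \<and> bij (R a)" "\<forall>a\<in>\<Phi>. R (- a) = inv (R a)"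
    "\<forall>a\<in>\<Phi>. \<forall>b\<in>\<Phi>. a \<bullet> b \<le> 0 \<and> b \<noteq> - a \<longrightarrow>
        fold (\<lambda>\<gamma> acc. acc \<circ> R \<gamma>) (rank2_roots a b) id = fold (\<lambda>\<gamma> acc. R \<gamma> \<circ> acc) (rank2_roots a b) id"
    using assms(5) unfolding R_matrix_def by blast+
  interpret X: affR \<Phi> r \<alpha> \<theta> R
  proof (unfold_locales)
    show "root_system \<Phi>" by (rule rs)
    show "simple_roots \<Phi> r \<alpha>" by (rule assms(2))
    show "highest_coroot_root \<Phi> r \<alpha> \<theta>" by (rule assms(3))
    show "\<And>a. a \<in> \<Phi> \<Longrightarrow> bij (R a)" using Rm(1) by blast
    show "\<And>a. a \<in> \<Phi> \<Longrightarrow> R (- a) = inv (R a)" using Rm(2) by blast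
    show "\<And>a b. a \<in> \<Phi> \<Longrightarrow> b \<in> \<Phi> \<Longrightarrow> a \<bullet> b \<le> 0 \<Longrightarrow> b \<noteq> - a \<Longrightarrow>
      fold (\<lambda>\<gamma> acc. acc \<circ> R \<gamma>) (rank2_roots a b) id = fold (\<lambda>\<gamma> acc. R \<gamma> \<circ> acc) (rank2_roots a b) id"
      using Rm(3) by blast
  qed
  show ?thesis by (rule X.main[OF assms(6) assms(7) assms(8)])
qed


end
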